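(* In the setting described in the context, assume in addition that $u$ is strictly concave. Then the optimal indemnity is unique if and only if at least one of the following holds: (1) $\theta\ne 0$; (2) $\operatorname{ess\,inf} X=0$, the $\mathbb{P}$-essential infimum. Here uniqueness means that whenever $I_1,I_2\in\mathcal{I}_c$ both maximize $I\mapsto\rho_b(u(w-X+I(X)-\pi(I(X))))$ over $\mathcal{I}_c$, then $I_1(X)=I_2(X)$ $\mathbb{P}$-a.s.
   Context: Let $(\Omega,\mathcal{F},\mathbb{P})$ be a probability space, and let $X\ge 0$ be a random variable with $\mathbb{E}X<\infty$. Let $\mathcal{I}_c$ be the set of functions $I:[0,\infty)\to[0,\infty)$ with $0\le I(x)\le x$ and $0\le I(x)-I(y)\le x-y$ for all $0\le y\le x$. For a function $j:[0,1]\to\mathbb{R}$ and a random variable $Y$ essentially bounded below, with $S_Y(t)=\mathbb{P}(Y>t)$, set $$\rho_j(Y)=\int_{-\infty}^0 \big(j(S_Y(t))-j(1)\big)\,dt+\int_0^\infty j(S_Y(t))\,dt.$$ The premium principle is $\pi(Y)=(1+\theta)\mathbb{E}Y+\rho_k(Y)$, where $\theta>-1$ and $k:[0,1]\to[0,\infty)$ is continuous and concave with $k(0)=k(1)=0$. The buyer has wealth $w$ and a strictly increasing concave utility $u\in C^2(\mathbb{R})$. She also has a continuously differentiable, strictly increasing, convex $b:[0,1]\to[0,1]$ with $b(0)=0$ and $b(1)=1$. All quantities $\pi(I(X))$ and $\rho_b(u(w-X+I(X)-\pi(I(X))))$ are assumed finite for all $I$. *)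

theory Defs
  imports "HOL-Probability.Probability"
begin

definition strictly_concave_on :: "real set \<Rightarrow> (real \<Rightarrow> real) \<Rightarrow> bool" where
  "strictly_concave_on S f \<longleftrightarrow>
     (\<forall>x\<in>S. \<forall>y\<in>S. \<forall>t. x \<noteq> y \<and> 0 < t \<and> t < 1 \<longrightarrow>
        t * f x + (1 - t) * f y < f (t * x + (1 - t) * y))"

(* the class I_c of admissible indemnities (only values on [0,\<infinity>) matter) *)
definition Ic :: "(real \<Rightarrow> real) set" where
  "Ic = {I. \<forall>x\<ge>0. 0 \<le> I x \<and> I x \<le> x \<and>
             (\<forall>y. 0 \<le> y \<and> y \<le> x \<longrightarrow> 0 \<le> I x - I y \<and> I x - I y \<le> x - y)}"

definition surv :: "'a measure \<Rightarrow> ('a \<Rightarrow> real) \<Rightarrow> real \<Rightarrow> real" where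
  "surv M Y t = measure M {\<omega>\<in>space M. Y \<omega> > t}"

definition rho :: "'a measure \<Rightarrow> (real \<Rightarrow> real) \<Rightarrow> ('a \<Rightarrow> real) \<Rightarrow> real" where
  "rho M j Y = (LBINT t:{..0}. j (surv M Y t) - j 1) + (LBINT t:{0<..}. j (surv M Y t))"

definition rho_finite :: "'a measure \<Rightarrow> (real \<Rightarrow> real) \<Rightarrow> ('a \<Rightarrow> real) \<Rightarrow> bool" where
  "rho_finite M j Y \<longleftrightarrow>
     set_integrable lborel {..0} (\<lambda>t. j (surv M Y t) - j 1) \<and>
     set_integrable lborel {0<..} (\<lambda>t. j (surv M Y t))"

definition premium :: "'a measure \<Rightarrow> real \<Rightarrow> (real \<Rightarrow> real) \<Rightarrow> ('a \<Rightarrow> real) \<Rightarrow> real" where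
  "premium M \<theta> k Y = (1 + \<theta>) * (\<integral>\<omega>. Y \<omega> \<partial>M) + rho M k Y"

definition objective :: "'a measure \<Rightarrow> real \<Rightarrow> (real \<Rightarrow> real) \<Rightarrow> (real \<Rightarrow> real) \<Rightarrow> real
     \<Rightarrow> (real \<Rightarrow> real) \<Rightarrow> ('a \<Rightarrow> real) \<Rightarrow> (real \<Rightarrow> real) \<Rightarrow> real" where
  "objective M \<theta> k b w u X I =
     rho M b (\<lambda>\<omega>. u (w - X \<omega> + I (X \<omega>) - premium M \<theta> k (\<lambda>\<omega>'. I (X \<omega>'))))"

definition optimal :: "'a measure \<Rightarrow> real \<Rightarrow> (real \<Rightarrow> real) \<Rightarrow> (real \<Rightarrow> real) \<Rightarrow> real
     \<Rightarrow> (real \<Rightarrow> real) \<Rightarrow> ('a \<Rightarrow> real) \<Rightarrow> (real \<Rightarrow> real) \<Rightarrow> bool" where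
  "optimal M \<theta> k b w u X I \<longleftrightarrow>
     I \<in> Ic \<and> (\<forall>J\<in>Ic. objective M \<theta> k b w u X J \<le> objective M \<theta> k b w u X I)"

definition essinf :: "'a measure \<Rightarrow> ('a \<Rightarrow> real) \<Rightarrow> ereal" where
  "essinf M f = - esssup M (\<lambda>\<omega>. - ereal (f \<omega>))"

end

theory Submission
  imports Defs "HOL-Library.Diagonal_Subsequence"
begin


lemma Ic_D:
  assumes "I \<in> Ic" "0 \<le> y" "y \<le> x"
  shows "0 \<le> I x" "I x \<le> x" "I y \<le> I x" "I x - I y \<le> x - y"
  using assms unfolding Ic_def by auto

lemma Ic_0: "I \<in> Ic \<Longrightarrow> I 0 = 0"
  using Ic_D[of I 0 0] by auto

definition Iext :: "(real \<Rightarrow> real) \<Rightarrow> real \<Rightarrow> real" where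
  "Iext I x = I (max x 0)"

lemma Iext_bounds:
  assumes "I \<in> Ic" shows "0 \<le> Iext I x" "Iext I x \<le> max x 0"
  using Ic_D[OF assms, of "max x 0" "max x 0"] by (auto simp: Iext_def)

lemma Iext_mono:
  assumes "I \<in> Ic" shows "mono (Iext I)"
proof
  fix x y :: real assume "x \<le> y"
  then show "Iext I x \<le> Iext I y"
    using Ic_D[OF assms, of "max x 0" "max y 0"] by (auto simp: Iext_def)
qed

lemma Iext_lip:
  assumes "I \<in> Ic" shows "\<bar>Iext I x - Iext I y\<bar> \<le> \<bar>x - y\<bar>"
proof -
  have *: "\<bar>Iext I x - Iext I y\<bar> \<le> \<bar>x - y\<bar>" if "x \<le> y" for x y
    using Ic_D[OF assms, of "max x 0" "max y 0"] that by (auto simp: Iext_def max_def)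
  show ?thesis
    using *[of x y] *[of y x] by (cases "x \<le> y") (auto simp: abs_minus_commute)
qed

lemma Iext_cont:
  assumes "I \<in> Ic" shows "continuous_on UNIV (Iext I)"
  unfolding continuous_on_iff
proof (intro ballI allI impI)
  fix x e :: real assume "0 < e"
  show "\<exists>d>0. \<forall>x'\<in>UNIV. dist x' x < d \<longrightarrow> dist (Iext I x') (Iext I x) < e"
    using Iext_lip[OF assms] \<open>0 < e\<close> by (intro exI[of _ e]) (auto simp: dist_real_def intro: le_less_trans)
qed

lemma Iext_eq: "0 \<le> x \<Longrightarrow> Iext I x = I x"
  by (simp add: Iext_def)

lemma surv_cdf:
  assumes M: "prob_space M" and Z: "Z \<in> borel_measurable M"
  shows "surv M Z a = 1 - cdf (distr M borel Z) a"
proof -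
  interpret prob_space M by fact
  have "cdf (distr M borel Z) a = measure M (Z -` {..a} \<inter> space M)"
    unfolding cdf_def using Z by (simp add: measure_distr)
  moreover have "{\<omega>\<in>space M. Z \<omega> > a} = space M - (Z -` {..a} \<inter> space M)"
    by auto
  moreover have "Z -` {..a} \<inter> space M \<in> events"
    using Z by measurable
  ultimately show ?thesis
    unfolding surv_def by (simp add: prob_compl)
qed

lemma surv_bounds:
  assumes M: "prob_space M"
  shows "0 \<le> surv M Z a" "surv M Z a \<le> 1"
  using prob_space.prob_le_1[OF M] unfolding surv_def by auto

definition Qm :: "'a measure \<Rightarrow> ('a \<Rightarrow> real) \<Rightarrow> (real \<Rightarrow> real) \<Rightarrow> real measure" where
  "Qm M Z j = interval_measure (\<lambda>a. j 1 - j (surv M Z a))"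

locale Qsetup =
  fixes M :: "'a measure" and Z :: "'a \<Rightarrow> real" and j :: "real \<Rightarrow> real"
  assumes M: "prob_space M" and Z: "Z \<in> borel_measurable M"
    and jc: "continuous_on {0..1} j" and jm: "mono_on {0..1} j" and j0: "j 0 = 0"
begin

abbreviation "Q \<equiv> Qm M Z j"
abbreviation "D \<equiv> distr M borel Z"
definition "F = (\<lambda>a. j 1 - j (surv M Z a))"

lemma D_rd: "real_distribution D"
  using prob_space.real_distribution_distr[OF M Z] .

lemma D_fb: "finite_borel_measure D"
  using real_distribution.finite_borel_measure_M[OF D_rd] .

lemma F_eq: "F a = j 1 - j (1 - cdf D a)"
  unfolding F_def using surv_cdf[OF M Z] by simp

lemma cdf01: "0 \<le> cdf D a" "cdf D a \<le> 1"
  using finite_borel_measure.cdf_nonneg[OF D_fb] real_distribution.cdf_bounded_prob[OF D_rd] by auto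

lemma F_mono: "x \<le> y \<Longrightarrow> F x \<le> F y"
  unfolding F_eq using cdf01[of x] cdf01[of y]
    finite_borel_measure.cdf_nondecreasing[OF D_fb, of x y]
  by (auto intro!: mono_onD[OF jm])

lemma j_tendsto:
  assumes "(g \<longlongrightarrow> l) F'" "l \<in> {0..1}" "\<forall>\<^sub>F x in F'. g x \<in> {0..1}"
  shows "((\<lambda>x. j (g x)) \<longlongrightarrow> j l) F'"
  by (rule continuous_on_tendsto_compose[OF jc assms])

lemma F_rcont: "continuous (at_right a) F"
proof -
  have "((\<lambda>x. 1 - cdf D x) \<longlongrightarrow> 1 - cdf D a) (at_right a)"
    using finite_borel_measure.cdf_is_right_cont[OF D_fb, of a]
    by (intro tendsto_intros) (simp add: continuous_within)
  then have "((\<lambda>x. j (1 - cdf D x)) \<longlongrightarrow> j (1 - cdf D a)) (at_right a)"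
    by (rule j_tendsto) (use cdf01 in auto)
  then have "((\<lambda>x. j 1 - j (1 - cdf D x)) \<longlongrightarrow> j 1 - j (1 - cdf D a)) (at_right a)"
    by (intro tendsto_intros)
  then show ?thesis
    unfolding continuous_within F_eq[abs_def] by simp
qed

lemma F_bot: "(F \<longlongrightarrow> 0) at_bot"
proof -
  have "((\<lambda>x. 1 - cdf D x) \<longlongrightarrow> 1 - 0) at_bot"
    using finite_borel_measure.cdf_lim_at_bot[OF D_fb] by (intro tendsto_intros)
  then have "((\<lambda>x. j (1 - cdf D x)) \<longlongrightarrow> j 1) at_bot"
    by (intro j_tendsto) (use cdf01 in auto)
  then have "((\<lambda>x. j 1 - j (1 - cdf D x)) \<longlongrightarrow> j 1 - j 1) at_bot"
    by (intro tendsto_intros)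
  then show ?thesis
    unfolding F_eq[abs_def] by simp
qed

lemma F_top: "(F \<longlongrightarrow> j 1) at_top"
proof -
  have "((\<lambda>x. 1 - cdf D x) \<longlongrightarrow> 1 - 1) at_top"
    using real_distribution.cdf_lim_at_top_prob[OF D_rd] by (intro tendsto_intros)
  then have "((\<lambda>x. j (1 - cdf D x)) \<longlongrightarrow> j 0) at_top"
    by (intro j_tendsto) (use cdf01 in auto)
  then have "((\<lambda>x. j 1 - j (1 - cdf D x)) \<longlongrightarrow> j 1 - j 0) at_top"
    by (intro tendsto_intros)
  then show ?thesis
    unfolding F_eq[abs_def] using j0 by simp
qed

lemma j1_nonneg: "0 \<le> j 1"
  using mono_onD[OF jm, of 0 1] j0 by auto

lemma j_nonneg: "p \<in> {0..1} \<Longrightarrow> 0 \<le> j p"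
  using mono_onD[OF jm, of 0 p] j0 by auto

lemma j_le1: "p \<in> {0..1} \<Longrightarrow> j p \<le> j 1"
  using mono_onD[OF jm, of p 1] by auto

lemma Q_eq: "Q = interval_measure F"
  unfolding Qm_def F_def ..

lemma Q_UNIV: "emeasure Q UNIV = j 1"
  unfolding Q_eq using interval_measure_UNIV[OF F_mono F_rcont F_bot F_top j1_nonneg] by simp

lemma Q_finite: "finite_measure Q"
proof -
  interpret finite_borel_measure "interval_measure F"
    using finite_borel_measure_interval_measure[OF F_mono F_rcont F_bot F_top j1_nonneg] .
  show ?thesis unfolding Q_eq by unfold_locales
qed

lemma sets_Q[simp, measurable_cong]: "sets Q = sets borel"
  unfolding Q_eq by simp

lemma space_Q[simp]: "space Q = UNIV"
  unfolding Q_eq by simp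

lemma Q_Iic: "measure Q {..x} = j 1 - j (surv M Z x)"
  unfolding Q_eq using measure_interval_measure_Iic[OF F_mono F_rcont F_bot] by (simp add: F_def)

lemma Q_UNIV': "measure Q UNIV = j 1"
  using Q_UNIV j1_nonneg by (simp add: measure_def)

lemma Q_Ioi: "measure Q {x<..} = j (surv M Z x)"
proof -
  interpret finite_measure Q by (rule Q_finite)
  have "{x<..} = space Q - {..x}" by auto
  then have "measure Q {x<..} = measure Q (space Q) - measure Q {..x}"
    using finite_measure_compl[of "{..x}"] by simp
  then show ?thesis using Q_Iic Q_UNIV' by simp
qed

lemma Q_Ioc: "a \<le> c \<Longrightarrow> measure Q {a<..c} = j (surv M Z a) - j (surv M Z c)"
  unfolding Q_eq using measure_interval_measure_Ioc[OF _ F_mono F_rcont, of a c] by (simp add: F_def)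

end



lemma layer_pos:
  assumes Q: "finite_measure Q" "sets Q = sets borel" and g[measurable]: "g \<in> borel_measurable borel"
  shows "(\<integral>\<^sup>+x. ennreal (max (g x) 0) \<partial>Q) = (\<integral>\<^sup>+t. indicator {0<..} t * emeasure Q {x. t < g x} \<partial>lborel)"
proof -
  interpret finite_measure Q by fact
  interpret pair_sigma_finite Q lborel
    by (simp add: pair_sigma_finite.intro lborel.sigma_finite_measure_axioms sigma_finite_measure)
  have sp: "space Q = UNIV" using sets_eq_imp_space_eq[OF Q(2)] by simp
  have mQ[measurable_cong]: "sets Q = sets borel" by fact
  have e1: "ennreal (max (g x) 0) = (\<integral>\<^sup>+t. indicator {0<..} t * indicator {x. t < g x} x \<partial>lborel)" for x
  proof -
    have "(\<lambda>t. indicator {0<..} t * indicator {x. t < g x} x) = (indicator {0<..<max (g x) 0} :: real \<Rightarrow> ennreal)"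
      by (auto simp: indicator_def fun_eq_iff)
    then show ?thesis by simp
  qed
  have "(\<integral>\<^sup>+x. ennreal (max (g x) 0) \<partial>Q) = (\<integral>\<^sup>+x. (\<integral>\<^sup>+t. indicator {0<..} t * indicator {x. t < g x} x \<partial>lborel) \<partial>Q)"
    by (rule nn_integral_cong) (rule e1)
  also have "\<dots> = (\<integral>\<^sup>+t. (\<integral>\<^sup>+x. indicator {0<..} t * indicator {x. t < g x} x \<partial>Q) \<partial>lborel)"
    by (rule Fubini'[symmetric]) measurable
  also have "\<dots> = (\<integral>\<^sup>+t. indicator {0<..} t * emeasure Q {x. t < g x} \<partial>lborel)"
  proof (rule nn_integral_cong)
    fix t
    have "{x. t < g x} \<in> sets Q" by (simp add: mQ)
    then show "(\<integral>\<^sup>+x. indicator {0<..} t * indicator {x. t < g x} x \<partial>Q) = indicator {0<..} t * emeasure Q {x. t < g x}"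
      by (simp add: nn_integral_cmult sp)
  qed
  finally show ?thesis .
qed

lemma layer_neg:
  assumes Q: "finite_measure Q" "sets Q = sets borel" and g[measurable]: "g \<in> borel_measurable borel"
  shows "(\<integral>\<^sup>+x. ennreal (max (- g x) 0) \<partial>Q) = (\<integral>\<^sup>+t. indicator {..0} t * emeasure Q {x. g x \<le> t} \<partial>lborel)"
proof -
  interpret finite_measure Q by fact
  interpret pair_sigma_finite Q lborel
    by (simp add: pair_sigma_finite.intro lborel.sigma_finite_measure_axioms sigma_finite_measure)
  have sp: "space Q = UNIV" using sets_eq_imp_space_eq[OF Q(2)] by simp
  have mQ[measurable_cong]: "sets Q = sets borel" by fact
  have e1: "ennreal (max (- g x) 0) = (\<integral>\<^sup>+t. indicator {..0} t * indicator {x. g x \<le> t} x \<partial>lborel)" for x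
  proof -
    have "(\<lambda>t. indicator {..0} t * indicator {x. g x \<le> t} x) = (indicator {g x..0} :: real \<Rightarrow> ennreal)"
      by (auto simp: indicator_def fun_eq_iff)
    then show ?thesis by (cases "g x \<le> 0") (simp_all add: max_def)
  qed
  have "(\<integral>\<^sup>+x. ennreal (max (- g x) 0) \<partial>Q) = (\<integral>\<^sup>+x. (\<integral>\<^sup>+t. indicator {..0} t * indicator {x. g x \<le> t} x \<partial>lborel) \<partial>Q)"
    by (rule nn_integral_cong) (rule e1)
  also have "\<dots> = (\<integral>\<^sup>+t. (\<integral>\<^sup>+x. indicator {..0} t * indicator {x. g x \<le> t} x \<partial>Q) \<partial>lborel)"
    by (rule Fubini'[symmetric]) measurable
  also have "\<dots> = (\<integral>\<^sup>+t. indicator {..0} t * emeasure Q {x. g x \<le> t} \<partial>lborel)"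
  proof (rule nn_integral_cong)
    fix t
    have "{x. g x \<le> t} \<in> sets Q" by (simp add: mQ)
    then show "(\<integral>\<^sup>+x. indicator {..0} t * indicator {x. g x \<le> t} x \<partial>Q) = indicator {..0} t * emeasure Q {x. g x \<le> t}"
      by (simp add: nn_integral_cmult sp)
  qed
  finally show ?thesis .
qed

context Qsetup
begin

lemma Q_level:
  assumes gc: "continuous_on UNIV g" and gm: "mono g"
  shows "measure Q {x. t < g x} = j (surv M (\<lambda>\<omega>. g (Z \<omega>)) t)"
proof -
  interpret prob_space M by (rule M)
  let ?A = "{x. t < g x}"
  consider "?A = UNIV" | "?A = {}" | "?A \<noteq> UNIV" "?A \<noteq> {}" by blast
  then show ?thesis
  proof cases
    case 1
    then have "surv M (\<lambda>\<omega>. g (Z \<omega>)) t = 1"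
      unfolding surv_def using prob_space by (auto simp: set_eq_iff)
    then show ?thesis using 1 Q_UNIV' by simp
  next
    case 2
    then have "surv M (\<lambda>\<omega>. g (Z \<omega>)) t = 0"
      unfolding surv_def by (auto simp: set_eq_iff)
    then show ?thesis using 2 j0 by simp
  next
    case 3
    then obtain x0 y0 where x0: "\<not> t < g x0" and y0: "t < g y0" by auto
    have lb: "x0 < y" if "y \<in> ?A" for y
    proof (rule ccontr)
      assume "\<not> x0 < y"
      then have "g y \<le> g x0" using gm by (auto simp: mono_def)
      then show False using that x0 by auto
    qed
    have bdd: "bdd_below ?A" using lb by (auto intro!: bdd_belowI[of _ x0] less_imp_le)
    have ne: "?A \<noteq> {}" using y0 by auto
    define a where "a = Inf ?A"
    have opn: "open ?A"
      using open_Collect_less[OF continuous_on_const gc] .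
    have A_eq: "?A = {a<..}"
    proof (intro set_eqI iffI)
      fix y assume y: "y \<in> ?A"
      obtain e where e: "e > 0" "ball y e \<subseteq> ?A" using openE[OF opn y] by blast
      have "y - e/2 \<in> ?A" using e by (intro subsetD[OF e(2)]) (auto simp: dist_real_def)
      then have "a \<le> y - e/2" unfolding a_def by (rule cInf_lower[OF _ bdd])
      then show "y \<in> {a<..}" using e by auto
    next
      fix y assume "y \<in> {a<..}"
      then have "Inf ?A < y" by (simp add: a_def)
      then obtain z where "z \<in> ?A" "z < y" using cInf_less_iff[OF ne bdd] by auto
      then show "y \<in> ?A" using gm by (auto simp: mono_def intro: less_le_trans)
    qed
    have "{\<omega>\<in>space M. t < g (Z \<omega>)} = {\<omega>\<in>space M. a < Z \<omega>}"
      using A_eq by (auto simp: set_eq_iff)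
    then have "surv M (\<lambda>\<omega>. g (Z \<omega>)) t = surv M Z a"
      unfolding surv_def by simp
    then show ?thesis using A_eq Q_Ioi by simp
  qed
qed

end



context Qsetup
begin

lemma Q_rep:
  assumes gc: "continuous_on UNIV g" and gm: "mono g" and fin: "rho_finite M j (\<lambda>\<omega>. g (Z \<omega>))"
  shows "integrable Q g" "rho M j (\<lambda>\<omega>. g (Z \<omega>)) = integral\<^sup>L Q g"
proof -
  interpret finite_measure Q by (rule Q_finite)
  define S where "S = surv M (\<lambda>\<omega>. g (Z \<omega>))"
  have gmeas[measurable]: "g \<in> borel_measurable borel"
    using borel_measurable_continuous_onI[OF gc] .
  have S01: "S t \<in> {0..1}" for t unfolding S_def using surv_bounds[OF M] by auto
  have em: "emeasure Q {x. t < g x} = ennreal (j (S t))" for t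
    using Q_level[OF gc gm, of t] by (simp add: emeasure_eq_measure S_def)
  have em2: "emeasure Q {x. g x \<le> t} = ennreal (j 1 - j (S t))" for t
  proof -
    have "{x. g x \<le> t} = space Q - {x. t < g x}" by auto
    then have "measure Q {x. g x \<le> t} = measure Q (space Q) - measure Q {x. t < g x}"
      using finite_measure_compl[of "{x. t < g x}"] by simp
    then show ?thesis using Q_level[OF gc gm, of t] Q_UNIV' by (simp add: emeasure_eq_measure S_def)
  qed
  from fin have fin1: "integrable lborel (\<lambda>t. indicator {..0} t *\<^sub>R (j (S t) - j 1))"
    and fin2: "integrable lborel (\<lambda>t. indicator {0<..} t *\<^sub>R j (S t))"
    unfolding rho_finite_def set_integrable_def S_def by auto
  define p where "p = integral\<^sup>L lborel (\<lambda>t. indicator {0<..} t *\<^sub>R j (S t))"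
  define n where "n = - integral\<^sup>L lborel (\<lambda>t. indicator {..0} t *\<^sub>R (j (S t) - j 1))"
  have p0: "0 \<le> p" unfolding p_def
    by (intro integral_nonneg_AE AE_I2) (use j_nonneg S01 in \<open>auto split: split_indicator\<close>)
  have n0: "0 \<le> n" unfolding n_def
    by (subst integral_minus[symmetric], intro integral_nonneg_AE AE_I2) (use j_le1 S01 in \<open>auto split: split_indicator\<close>)
  have P: "(\<integral>\<^sup>+x. ennreal (max (g x) 0) \<partial>Q) = ennreal p"
  proof -
    have "(\<integral>\<^sup>+x. ennreal (max (g x) 0) \<partial>Q) = (\<integral>\<^sup>+t. indicator {0<..} t * emeasure Q {x. t < g x} \<partial>lborel)"
      by (rule layer_pos[OF Q_finite sets_Q gmeas])
    also have "\<dots> = (\<integral>\<^sup>+t. ennreal (indicator {0<..} t *\<^sub>R j (S t)) \<partial>lborel)"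
      by (intro nn_integral_cong) (auto simp: em split: split_indicator)
    also have "\<dots> = ennreal p" unfolding p_def
      by (rule nn_integral_eq_integral[OF fin2]) (use j_nonneg S01 in \<open>auto split: split_indicator\<close>)
    finally show ?thesis .
  qed
  have N: "(\<integral>\<^sup>+x. ennreal (max (- g x) 0) \<partial>Q) = ennreal n"
  proof -
    have "(\<integral>\<^sup>+x. ennreal (max (- g x) 0) \<partial>Q) = (\<integral>\<^sup>+t. indicator {..0} t * emeasure Q {x. g x \<le> t} \<partial>lborel)"
      by (rule layer_neg[OF Q_finite sets_Q gmeas])
    also have "\<dots> = (\<integral>\<^sup>+t. ennreal (- (indicator {..0} t *\<^sub>R (j (S t) - j 1))) \<partial>lborel)"
      by (intro nn_integral_cong) (auto simp: em2 split: split_indicator)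
    also have "\<dots> = ennreal n" unfolding n_def
      by (subst integral_minus[symmetric], rule nn_integral_eq_integral)
        (use fin1 j_le1 S01 in \<open>auto split: split_indicator\<close>)
    finally show ?thesis .
  qed
  have ip: "integrable Q (\<lambda>x. max (g x) 0)" and ipv: "integral\<^sup>L Q (\<lambda>x. max (g x) 0) = p"
    using nn_integral_eq_integrable[of "\<lambda>x. max (g x) 0" Q p] P p0 by auto
  have iN: "integrable Q (\<lambda>x. max (- g x) 0)" and iNv: "integral\<^sup>L Q (\<lambda>x. max (- g x) 0) = n"
    using nn_integral_eq_integrable[of "\<lambda>x. max (- g x) 0" Q n] N n0 by auto
  have geq: "g = (\<lambda>x. max (g x) 0 - max (- g x) 0)" by (auto simp: fun_eq_iff max_def)
  show "integrable Q g" by (subst geq) (intro Bochner_Integration.integrable_diff ip iN)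
  have "integral\<^sup>L Q g = p - n" by (subst geq) (simp add: Bochner_Integration.integral_diff[OF ip iN] ipv iNv)
  then show "rho M j (\<lambda>\<omega>. g (Z \<omega>)) = integral\<^sup>L Q g"
    unfolding rho_def p_def n_def set_lebesgue_integral_def S_def by simp
qed

end



definition ratcov :: "real set \<Rightarrow> (real \<times> real) set" where
  "ratcov U = {(p, q). p \<in> \<rat> \<and> q \<in> \<rat> \<and> p \<le> q \<and> {p<..q} \<subseteq> U}"

lemma ratcov_countable: "countable (ratcov U)"
proof -
  have "ratcov U \<subseteq> \<rat> \<times> \<rat>" unfolding ratcov_def by auto
  moreover have "countable (\<rat> \<times> \<rat>)" by (intro countable_SIGMA countable_rat)
  ultimately show ?thesis by (rule countable_subset)
qed

lemma ratcov_sub: "pq \<in> ratcov U \<Longrightarrow> {fst pq<..snd pq} \<subseteq> U"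
  and ratcov_le: "pq \<in> ratcov U \<Longrightarrow> fst pq \<le> snd pq"
  unfolding ratcov_def by auto

lemma ratcov_eq:
  assumes "open U"
  shows "U = (\<Union>pq\<in>ratcov U. {fst pq<..snd pq})"
proof (intro set_eqI iffI)
  fix x assume "x \<in> U"
  then obtain e where e: "e > 0" "ball x e \<subseteq> U" using openE[OF assms] by blast
  obtain p where p: "p \<in> \<rat>" "x - e < p" "p < x" using Rats_dense_in_real[of "x - e" x] e by auto
  obtain q where q: "q \<in> \<rat>" "x < q" "q < x + e" using Rats_dense_in_real[of x "x + e"] e by auto
  have "{p<..q} \<subseteq> ball x e" using p q by (auto simp: dist_real_def)
  then have "(p, q) \<in> ratcov U" using p q e unfolding ratcov_def by auto
  then show "x \<in> (\<Union>pq\<in>ratcov U. {fst pq<..snd pq})" using p q by force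
next
  fix x assume "x \<in> (\<Union>pq\<in>ratcov U. {fst pq<..snd pq})"
  then show "x \<in> U" using ratcov_sub by blast
qed

context Qsetup
begin

lemma surv_diff:
  assumes "a \<le> c"
  shows "surv M Z a - surv M Z c = measure M {\<omega>\<in>space M. Z \<omega> \<in> {a<..c}}"
proof -
  interpret prob_space M by (rule M)
  have "{\<omega>\<in>space M. a < Z \<omega>} = {\<omega>\<in>space M. c < Z \<omega>} \<union> {\<omega>\<in>space M. Z \<omega> \<in> {a<..c}}"
    using assms by auto
  moreover have "measure M ({\<omega>\<in>space M. c < Z \<omega>} \<union> {\<omega>\<in>space M. Z \<omega> \<in> {a<..c}}) =
     measure M {\<omega>\<in>space M. c < Z \<omega>} + measure M {\<omega>\<in>space M. Z \<omega> \<in> {a<..c}}"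
    by (rule finite_measure_Union) (use Z in \<open>auto\<close>)
  ultimately show ?thesis unfolding surv_def by simp
qed

lemma Q_open_null:
  assumes "open U" and null: "measure M {\<omega>\<in>space M. Z \<omega> \<in> U} = 0"
  shows "U \<in> null_sets Q"
proof -
  interpret prob_space M by (rule M)
  interpret fQ: finite_measure Q by (rule Q_finite)
  have "(\<Union>pq\<in>ratcov U. {fst pq<..snd pq}) \<in> null_sets Q"
  proof (rule null_sets_UN'[OF ratcov_countable])
    fix pq assume pq: "pq \<in> ratcov U"
    have "measure M {\<omega>\<in>space M. Z \<omega> \<in> {fst pq<..snd pq}} \<le> measure M {\<omega>\<in>space M. Z \<omega> \<in> U}"
      using ratcov_sub[OF pq] measurable_sets[OF Z borel_open[OF assms(1)]]
      by (intro finite_measure_mono) (auto simp: Int_def conj_commute)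
    then have "measure M {\<omega>\<in>space M. Z \<omega> \<in> {fst pq<..snd pq}} = 0" using null by (simp add: measure_nonneg antisym)
    then have "measure Q {fst pq<..snd pq} = 0"
      using Q_Ioc[OF ratcov_le[OF pq]] surv_diff[OF ratcov_le[OF pq]] by simp
    then show "{fst pq<..snd pq} \<in> null_sets Q"
      by (simp add: fQ.emeasure_eq_measure null_sets_def)
  qed
  then show ?thesis using ratcov_eq[OF assms(1)] by simp
qed

lemma Q_open_pos:
  assumes js: "strict_mono_on {0..1} j" and "open U" and pos: "measure M {\<omega>\<in>space M. Z \<omega> \<in> U} > 0"
  shows "measure Q U > 0"
proof (rule ccontr)
  interpret prob_space M by (rule M)
  interpret fQ: finite_measure Q by (rule Q_finite)
  assume nq: "\<not> measure Q U > 0"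
  have "{\<omega>\<in>space M. Z \<omega> \<in> U} = (\<Union>pq\<in>ratcov U. {\<omega>\<in>space M. Z \<omega> \<in> {fst pq<..snd pq}})"
    using ratcov_eq[OF assms(2)] by blast
  also have "\<dots> \<in> null_sets M"
  proof (rule null_sets_UN'[OF ratcov_countable])
    fix pq assume pq: "pq \<in> ratcov U"
    have "measure Q {fst pq<..snd pq} \<le> measure Q U"
      using ratcov_sub[OF pq] assms(2) by (intro fQ.finite_measure_mono) auto
    then have "measure Q {fst pq<..snd pq} = 0" using nq by (simp add: measure_nonneg antisym)
    then have "j (surv M Z (fst pq)) = j (surv M Z (snd pq))"
      using Q_Ioc[OF ratcov_le[OF pq]] by simp
    moreover have "surv M Z (snd pq) \<le> surv M Z (fst pq)"
      using surv_diff[OF ratcov_le[OF pq]] measure_nonneg[of M "{\<omega>\<in>space M. Z \<omega> \<in> {fst pq<..snd pq}}"] by linarith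
    ultimately have "surv M Z (fst pq) = surv M Z (snd pq)"
      using js surv_bounds[OF M] unfolding strict_mono_on_def
      by (metis atLeastAtMost_iff order_less_irrefl order_le_less)
    then have "measure M {\<omega>\<in>space M. Z \<omega> \<in> {fst pq<..snd pq}} = 0"
      using surv_diff[OF ratcov_le[OF pq]] by simp
    then show "{\<omega>\<in>space M. Z \<omega> \<in> {fst pq<..snd pq}} \<in> null_sets M"
      using Z by (auto simp: emeasure_eq_measure null_sets_def)
  qed
  finally show False using pos by (simp add: null_sets_def emeasure_eq_measure)
qed

end



lemma concave_max_mono1:
  fixes k :: "real \<Rightarrow> real"
  assumes kc: "concave_on {0..1} k" and p: "p \<in> {0..1}" and mx: "\<forall>x\<in>{0..1}. k x \<le> k p"
    and xy: "0 \<le> x" "x \<le> y" "y \<le> p"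
  shows "k x \<le> k y"
proof (cases "x = p")
  case True then have "y = p" using xy by auto
  then show ?thesis using True by simp
next
  case False
  then have xp: "x < p" using xy by auto
  define t where "t = (y - x) / (p - x)"
  have t0: "0 \<le> t" "t \<le> 1" using xy xp by (auto simp: t_def field_simps)
  have tt: "t * (p - x) = y - x" using xp by (simp add: t_def)
  have ye: "(1 - t) *\<^sub>R x + t *\<^sub>R p = y"
  proof -
    have "(1 - t) *\<^sub>R x + t *\<^sub>R p = x + t * (p - x)" by (simp add: algebra_simps)
    then show ?thesis using tt by simp
  qed
  have "(1 - t) * k x + t * k p \<le> k ((1 - t) *\<^sub>R x + t *\<^sub>R p)"
    by (rule concave_onD[OF kc t0]) (use xy p in auto)
  moreover have "(1 - t) * k x + t * k x \<le> (1 - t) * k x + t * k p"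
    using mx xy p t0 by (intro add_left_mono mult_left_mono) auto
  ultimately show ?thesis using ye by (simp add: algebra_simps)
qed

lemma concave_max_mono2:
  fixes k :: "real \<Rightarrow> real"
  assumes kc: "concave_on {0..1} k" and p: "p \<in> {0..1}" and mx: "\<forall>x\<in>{0..1}. k x \<le> k p"
    and xy: "p \<le> x" "x \<le> y" "y \<le> 1"
  shows "k y \<le> k x"
proof (cases "y = p")
  case True then have "x = p" using xy by auto
  then show ?thesis using True by simp
next
  case False
  then have yp: "p < y" using xy by auto
  define t where "t = (x - p) / (y - p)"
  have t0: "0 \<le> t" "t \<le> 1" using xy yp by (auto simp: t_def field_simps)
  have tt: "t * (y - p) = x - p" using yp by (simp add: t_def)
  have xe: "(1 - t) *\<^sub>R p + t *\<^sub>R y = x"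
  proof -
    have "(1 - t) *\<^sub>R p + t *\<^sub>R y = p + t * (y - p)" by (simp add: algebra_simps)
    then show ?thesis using tt by simp
  qed
  have "(1 - t) * k p + t * k y \<le> k ((1 - t) *\<^sub>R p + t *\<^sub>R y)"
    by (rule concave_onD[OF kc t0]) (use xy p in auto)
  moreover have "(1 - t) * k y + t * k y \<le> (1 - t) * k p + t * k y"
    using mx xy p t0 by (intro add_right_mono mult_left_mono) auto
  ultimately show ?thesis using xe by (simp add: algebra_simps)
qed

lemma surv_cong:
  assumes "\<forall>\<omega>\<in>space M. f \<omega> = g \<omega>"
  shows "surv M f = surv M g"
proof -
  have "{\<omega>\<in>space M. t < f \<omega>} = {\<omega>\<in>space M. t < g \<omega>}" for t using assms by auto
  then show ?thesis unfolding surv_def by (simp add: fun_eq_iff)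
qed

lemma rho_cong:
  assumes "\<forall>\<omega>\<in>space M. f \<omega> = g \<omega>"
  shows "rho M j f = rho M j g" "rho_finite M j f = rho_finite M j g"
  unfolding rho_def rho_finite_def using surv_cong[OF assms] by simp_all

lemma surv_mono_arg:
  assumes "finite_measure M" "g \<in> borel_measurable M" "s \<le> t"
  shows "surv M g t \<le> surv M g s"
  unfolding surv_def using assms
  by (intro finite_measure.finite_measure_mono) auto

lemma surv_le:
  assumes "finite_measure M" "f \<in> borel_measurable M" "\<forall>\<omega>\<in>space M. g \<omega> \<le> f \<omega>"
  shows "surv M g t \<le> surv M f t"
  unfolding surv_def using assms
  by (intro finite_measure.finite_measure_mono) auto



definition pk :: "(real \<Rightarrow> real) \<Rightarrow> real" where
  "pk k = (SOME p. p \<in> {0<..1} \<and> (\<forall>x\<in>{0..1}. k x \<le> k p))"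

definition kA :: "(real \<Rightarrow> real) \<Rightarrow> real \<Rightarrow> real" where
  "kA k x = k (min x (pk k))"

definition kB :: "(real \<Rightarrow> real) \<Rightarrow> real \<Rightarrow> real" where
  "kB k x = k (pk k) - k (max x (pk k))"

locale setting =
  fixes M :: "'a measure" and X :: "'a \<Rightarrow> real"
    and \<theta> w :: real and k b u :: "real \<Rightarrow> real"
  assumes M: "prob_space M"
    and Xm: "X \<in> borel_measurable M" and Xnn: "\<forall>\<omega>\<in>space M. X \<omega> \<ge> 0" and Xint: "integrable M X"
    and th: "\<theta> > -1"
    and kc: "continuous_on {0..1} k" and kcc: "concave_on {0..1} k"
    and knn: "\<forall>p\<in>{0..1}. k p \<ge> 0" and k0: "k 0 = 0" and k1: "k 1 = 0"
    and ud: "\<exists>u' u''. (\<forall>x. (u has_real_derivative u' x) (at x)) \<and>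
                 (\<forall>x. (u' has_real_derivative u'' x) (at x)) \<and> continuous_on UNIV u''"
    and usm: "strict_mono u" and ucc: "concave_on UNIV u" and usc: "strictly_concave_on UNIV u"
    and bd: "\<exists>b'. continuous_on {0..1} b' \<and>
               (\<forall>p\<in>{0..1}. (b has_real_derivative b' p) (at p within {0..1}))"
    and bsm: "strict_mono_on {0..1} b" and bcv: "convex_on {0..1} b"
    and b01: "\<forall>p\<in>{0..1}. b p \<in> {0..1}" and b0: "b 0 = 0" and b1: "b 1 = 1"
    and kfin: "\<forall>I\<in>Ic. rho_finite M k (\<lambda>\<omega>. I (X \<omega>))"
    and bfin: "\<forall>I\<in>Ic. rho_finite M b
           (\<lambda>\<omega>. u (w - X \<omega> + I (X \<omega>) - premium M \<theta> k (\<lambda>\<omega>'. I (X \<omega>'))))"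
begin

lemma u_cont: "continuous_on UNIV u"
proof -
  obtain u' where "\<forall>x. (u has_real_derivative u' x) (at x)" using ud by blast
  then show ?thesis
    by (intro continuous_at_imp_continuous_on) (auto intro: DERIV_isCont)
qed

lemma b_cont: "continuous_on {0..1} b"
proof -
  obtain b' where "\<forall>p\<in>{0..1}. (b has_real_derivative b' p) (at p within {0..1})" using bd by blast
  then show ?thesis
    unfolding continuous_on_eq_continuous_within by (auto intro: DERIV_continuous)
qed

lemma b_mono: "mono_on {0..1} b"
  using strict_mono_on_imp_mono_on[OF bsm] .

lemma pk_ex: "\<exists>p. p \<in> {0<..1} \<and> (\<forall>x\<in>{0..1}. k x \<le> k p)"
proof -
  obtain p0 where p0: "p0 \<in> {0..1}" "\<forall>y\<in>{0..1}. k y \<le> k p0"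
    using continuous_attains_sup[OF compact_Icc _ kc] by auto
  show ?thesis
  proof (cases "p0 = 0")
    case True
    have "\<forall>y\<in>{0..1}. k y \<le> k (1/2)"
    proof
      fix y :: real assume "y \<in> {0..1}"
      then have "k y \<le> 0" using p0 True k0 by auto
      moreover have "0 \<le> k (1/2)" using knn by auto
      ultimately show "k y \<le> k (1/2)" by linarith
    qed
    then show ?thesis by (intro exI[of _ "1/2"]) auto
  next
    case False
    then show ?thesis using p0 by (intro exI[of _ p0]) auto
  qed
qed

lemma pk: "pk k \<in> {0<..1}" "\<forall>x\<in>{0..1}. k x \<le> k (pk k)"
  using someI_ex[OF pk_ex] unfolding pk_def by auto

lemma k_mono1: "0 \<le> x \<Longrightarrow> x \<le> y \<Longrightarrow> y \<le> pk k \<Longrightarrow> k x \<le> k y"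
  by (rule concave_max_mono1[OF kcc _ pk(2)]) (use pk(1) in auto)

lemma k_mono2: "pk k \<le> x \<Longrightarrow> x \<le> y \<Longrightarrow> y \<le> 1 \<Longrightarrow> k y \<le> k x"
  by (rule concave_max_mono2[OF kcc _ pk(2)]) (use pk(1) in auto)

lemma kA_cont: "continuous_on {0..1} (kA k)"
proof -
  have c: "continuous_on {0..1} (\<lambda>x::real. min x (pk k))"
    by (intro continuous_on_min continuous_on_id continuous_on_const)
  show ?thesis unfolding kA_def
    by (rule continuous_on_compose2[OF kc c]) (use pk(1) in auto)
qed

lemma kB_cont: "continuous_on {0..1} (kB k)"
proof -
  have c: "continuous_on {0..1} (\<lambda>x::real. max x (pk k))"
    by (intro continuous_on_max continuous_on_id continuous_on_const)
  have "continuous_on {0..1} (\<lambda>x. k (max x (pk k)))"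
    by (rule continuous_on_compose2[OF kc c]) (use pk(1) in auto)
  then show ?thesis unfolding kB_def
    by (intro continuous_on_diff continuous_on_const)
qed

lemma kA_mono: "mono_on {0..1} (kA k)"
  unfolding kA_def by (intro mono_onI k_mono1) (use pk(1) in auto)

lemma kB_mono: "mono_on {0..1} (kB k)"
proof (intro mono_onI)
  fix x y :: real assume "x \<in> {0..1}" "y \<in> {0..1}" "x \<le> y"
  then show "kB k x \<le> kB k y"
    unfolding kB_def using k_mono2[of "max x (pk k)" "max y (pk k)"] pk(1) by auto
qed

lemma kA0: "kA k 0 = 0" using pk(1) k0 by (simp add: kA_def)
lemma kB0: "kB k 0 = 0" using pk(1) by (simp add: kB_def)

lemma k_split: "x \<in> {0..1} \<Longrightarrow> k x = kA k x - kB k x"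
  by (auto simp: kA_def kB_def min_def max_def)

lemma kAB1: "kA k 1 - kB k 1 = 0"
  using k_split[of 1] k1 by simp

lemma kB_bounds: "x \<in> {0..1} \<Longrightarrow> 0 \<le> kB k x \<and> kB k x \<le> k (pk k)"
  unfolding kB_def using pk knn by (auto simp: max_def)

lemma Xneg_m: "(\<lambda>\<omega>. - X \<omega>) \<in> borel_measurable M"
  using Xm by measurable

sublocale QA: Qsetup M X "kA k"
  using M Xm kA_cont kA_mono kA0 by (rule Qsetup.intro)

sublocale QB: Qsetup M X "kB k"
  using M Xm kB_cont kB_mono kB0 by (rule Qsetup.intro)

sublocale Qb: Qsetup M "\<lambda>\<omega>. - X \<omega>" b
  using M Xneg_m b_cont b_mono b0 by (rule Qsetup.intro)
end



context setting
begin

lemma IX_eq: "\<omega> \<in> space M \<Longrightarrow> Iext I (X \<omega>) = I (X \<omega>)"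
  using Xnn by (simp add: Iext_eq)

lemma Iext_meas: "I \<in> Ic \<Longrightarrow> (\<lambda>\<omega>. Iext I (X \<omega>)) \<in> borel_measurable M"
  using borel_measurable_continuous_on[OF Iext_cont Xm] by simp

lemma IX_meas: "I \<in> Ic \<Longrightarrow> (\<lambda>\<omega>. I (X \<omega>)) \<in> borel_measurable M"
proof -
  assume I: "I \<in> Ic"
  have "(\<lambda>\<omega>. I (X \<omega>)) \<in> borel_measurable M \<longleftrightarrow> (\<lambda>\<omega>. Iext I (X \<omega>)) \<in> borel_measurable M"
    by (rule measurable_cong) (metis IX_eq)
  then show ?thesis using Iext_meas[OF I] by simp
qed

lemma IX_int: "I \<in> Ic \<Longrightarrow> integrable M (\<lambda>\<omega>. I (X \<omega>))"
  by (rule Bochner_Integration.integrable_bound[OF Xint IX_meas])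
     (use Ic_D Xnn in \<open>auto intro!: AE_I2\<close>)

lemma surv_antimono_comp:
  fixes j :: "real \<Rightarrow> real"
  assumes jm: "mono_on {0..1} j" and g: "g \<in> borel_measurable M"
  shows "(\<lambda>t. j (surv M g t)) \<in> borel_measurable borel"
proof -
  have "mono (\<lambda>t. - j (surv M g t))"
  proof
    fix s t :: real assume "s \<le> t"
    then have "surv M g t \<le> surv M g s"
      using surv_mono_arg[OF prob_space.finite_measure[OF M] g] by auto
    then show "- j (surv M g s) \<le> - j (surv M g t)"
      using mono_onD[OF jm] surv_bounds[OF M] by auto
  qed
  then have "(\<lambda>t. - j (surv M g t)) \<in> borel_measurable borel" by (rule borel_measurable_mono)
  then have "(\<lambda>t. - (- j (surv M g t))) \<in> borel_measurable borel" by measurable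
  then show ?thesis by simp
qed

lemma surv_X_small: "\<exists>T. \<forall>t\<ge>T. surv M X t < pk k"
proof -
  have "((\<lambda>t. 1 - cdf QA.D t) \<longlongrightarrow> 1 - 1) at_top"
    using real_distribution.cdf_lim_at_top_prob[OF QA.D_rd] by (intro tendsto_intros)
  then have "((\<lambda>t. surv M X t) \<longlongrightarrow> 0) at_top"
    using surv_cdf[OF M Xm] by simp
  then have "eventually (\<lambda>t. surv M X t < pk k) at_top"
    using pk(1) by (intro order_tendstoD(2)) auto
  then show ?thesis by (simp add: eventually_at_top_linorder)
qed

lemma kparts_fin:
  assumes I: "I \<in> Ic"
  shows "rho_finite M (kA k) (\<lambda>\<omega>. Iext I (X \<omega>))" "rho_finite M (kB k) (\<lambda>\<omega>. Iext I (X \<omega>))"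
    "rho M k (\<lambda>\<omega>. Iext I (X \<omega>)) = rho M (kA k) (\<lambda>\<omega>. Iext I (X \<omega>)) - rho M (kB k) (\<lambda>\<omega>. Iext I (X \<omega>))"
proof -
  interpret prob_space M by (rule M)
  define Y where "Y = (\<lambda>\<omega>. Iext I (X \<omega>))"
  define S where "S = surv M Y"
  have Ym[measurable]: "Y \<in> borel_measurable M" unfolding Y_def using Iext_meas[OF I] .
  have fk: "rho_finite M k Y"
    using kfin I rho_cong(2)[of M Y "\<lambda>\<omega>. I (X \<omega>)"] by (simp add: Y_def IX_eq)
  have S01: "S t \<in> {0..1}" for t unfolding S_def using surv_bounds[OF M] by auto
  have Sneg: "S t = 1" if "t < 0" for t
  proof -
    have "{\<omega>\<in>space M. t < Y \<omega>} = space M"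
      using that Iext_bounds(1)[OF I] by (auto simp: Y_def intro: less_le_trans)
    then show ?thesis unfolding S_def surv_def using prob_space by simp
  qed
  have SX: "S t \<le> surv M X t" for t
    unfolding S_def
  proof (rule surv_le[OF finite_measure Xm])
    show "\<forall>\<omega>\<in>space M. Y \<omega> \<le> X \<omega>"
    proof
      fix \<omega> assume "\<omega> \<in> space M"
      then have "max (X \<omega>) 0 = X \<omega>" using Xnn by auto
      then show "Y \<omega> \<le> X \<omega>" using Iext_bounds(2)[OF I, of "X \<omega>"] by (simp add: Y_def)
    qed
  qed
  obtain T where T: "\<forall>t\<ge>T. surv M X t < pk k" using surv_X_small by blast
  have mA: "(\<lambda>t. kA k (S t)) \<in> borel_measurable borel"
    unfolding S_def by (rule surv_antimono_comp[OF kA_mono Ym])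
  have mB: "(\<lambda>t. kB k (S t)) \<in> borel_measurable borel"
    unfolding S_def by (rule surv_antimono_comp[OF kB_mono Ym])
  have neg: "integrable lborel (\<lambda>t. indicator {..0} t *\<^sub>R (j (S t) - j 1))"
    if jm: "(\<lambda>t. j (S t)) \<in> borel_measurable borel" for j
  proof (rule integrable_cong_AE_imp[OF integrable_zero])
    show "(\<lambda>t. indicator {..0} t *\<^sub>R (j (S t) - j 1)) \<in> borel_measurable lborel"
      using jm by measurable
    show "AE t in lborel. 0 = indicator {..0} t *\<^sub>R (j (S t) - j 1)"
      using AE_lborel_singleton[of 0]
      by eventually_elim (auto simp: Sneg split: split_indicator)
  qed
  from fk have fk1: "integrable lborel (\<lambda>t. indicator {..0} t *\<^sub>R (k (S t) - k 1))"
    and fk2: "integrable lborel (\<lambda>t. indicator {0<..} t *\<^sub>R k (S t))"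
    unfolding rho_finite_def set_integrable_def S_def by auto
  define T' where "T' = max T 0"
  have posB: "integrable lborel (\<lambda>t. indicator {0<..} t *\<^sub>R kB k (S t))"
  proof (rule Bochner_Integration.integrable_bound)
    show "integrable lborel (\<lambda>t. k (pk k) * indicator {0..T'} t)"
      by (intro integrable_mult_right) (simp add: integrable_indicator_iff T'_def)
    show "(\<lambda>t. indicator {0<..} t *\<^sub>R kB k (S t)) \<in> borel_measurable lborel"
      using mB by measurable
    show "AE t in lborel. norm (indicator {0<..} t *\<^sub>R kB k (S t)) \<le> norm (k (pk k) * indicator {0..T'} t)"
    proof (intro AE_I2)
      fix t :: real
      have b: "0 \<le> kB k (S t) \<and> kB k (S t) \<le> k (pk k)" using kB_bounds S01 by auto
      have z: "kB k (S t) = 0" if "t > T'"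
      proof -
        have "T \<le> t" using that unfolding T'_def by auto
        then have "surv M X t < pk k" using T by auto
        then have "S t \<le> pk k" using SX[of t] by linarith
        then show ?thesis by (simp add: kB_def max_def)
      qed
      show "norm (indicator {0<..} t *\<^sub>R kB k (S t)) \<le> norm (k (pk k) * indicator {0..T'} t)"
        using b z by (cases "t \<le> T'") (auto split: split_indicator)
    qed
  qed
  have posA_eq: "indicator {0<..} t *\<^sub>R kA k (S t) = indicator {0<..} t *\<^sub>R k (S t) + indicator {0<..} t *\<^sub>R kB k (S t)" for t
    using k_split[OF S01[of t]] by (simp add: distrib_left[symmetric])
  have posA: "integrable lborel (\<lambda>t. indicator {0<..} t *\<^sub>R kA k (S t))"
    unfolding posA_eq by (intro Bochner_Integration.integrable_add fk2 posB)
  have negA: "integrable lborel (\<lambda>t. indicator {..0} t *\<^sub>R (kA k (S t) - kA k 1))" by (rule neg[OF mA])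
  have negB: "integrable lborel (\<lambda>t. indicator {..0} t *\<^sub>R (kB k (S t) - kB k 1))" by (rule neg[OF mB])
  show "rho_finite M (kA k) (\<lambda>\<omega>. Iext I (X \<omega>))" "rho_finite M (kB k) (\<lambda>\<omega>. Iext I (X \<omega>))"
    unfolding rho_finite_def set_integrable_def using posA posB negA negB by (simp_all add: S_def Y_def)
  have e1: "indicator {..0} t *\<^sub>R (k (S t) - k 1) = indicator {..0} t *\<^sub>R (kA k (S t) - kA k 1) - indicator {..0} t *\<^sub>R (kB k (S t) - kB k 1)" for t
    using k_split[OF S01[of t]] k_split[of 1] by (auto split: split_indicator)
  have e2: "indicator {0<..} t *\<^sub>R k (S t) = indicator {0<..} t *\<^sub>R kA k (S t) - indicator {0<..} t *\<^sub>R kB k (S t)" for t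
    using k_split[OF S01[of t]] by (auto split: split_indicator)
  have "rho M k Y = rho M (kA k) Y - rho M (kB k) Y"
    unfolding rho_def set_lebesgue_integral_def S_def[symmetric] e1 e2
    using Bochner_Integration.integral_diff[OF negA negB] Bochner_Integration.integral_diff[OF posA posB]
    by simp
  then show "rho M k (\<lambda>\<omega>. Iext I (X \<omega>)) = rho M (kA k) (\<lambda>\<omega>. Iext I (X \<omega>)) - rho M (kB k) (\<lambda>\<omega>. Iext I (X \<omega>))"
    by (simp add: Y_def)
qed

lemma prem_rep:
  assumes I: "I \<in> Ic"
  shows "integrable QA.Q (Iext I)" "integrable QB.Q (Iext I)"
    "premium M \<theta> k (\<lambda>\<omega>. I (X \<omega>)) = (1 + \<theta>) * (\<integral>\<omega>. I (X \<omega>) \<partial>M) + ((\<integral>x. Iext I x \<partial>QA.Q) - (\<integral>x. Iext I x \<partial>QB.Q))"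
proof -
  note A = QA.Q_rep[OF Iext_cont[OF I] Iext_mono[OF I] kparts_fin(1)[OF I]]
  note B = QB.Q_rep[OF Iext_cont[OF I] Iext_mono[OF I] kparts_fin(2)[OF I]]
  show "integrable QA.Q (Iext I)" "integrable QB.Q (Iext I)" using A B by auto
  have "rho M k (\<lambda>\<omega>. I (X \<omega>)) = rho M k (\<lambda>\<omega>. Iext I (X \<omega>))"
    by (rule rho_cong(1)) (simp add: IX_eq)
  then show "premium M \<theta> k (\<lambda>\<omega>. I (X \<omega>)) = (1 + \<theta>) * (\<integral>\<omega>. I (X \<omega>) \<partial>M) + ((\<integral>x. Iext I x \<partial>QA.Q) - (\<integral>x. Iext I x \<partial>QB.Q))"
    unfolding premium_def using kparts_fin(3)[OF I] A(2) B(2) by simp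
qed

end



context Qsetup
begin

lemma Q_AE_from_M:
  fixes f g :: "real \<Rightarrow> real"
  assumes f: "continuous_on UNIV f" and g: "continuous_on UNIV g"
    and ae: "AE \<omega> in M. f (Z \<omega>) = g (Z \<omega>)"
  shows "AE x in Q. f x = g x"
proof -
  let ?U = "{x. f x \<noteq> g x}"
  have opn: "open ?U" by (rule open_Collect_neq[OF f g])
  have fm[measurable]: "f \<in> borel_measurable borel" "g \<in> borel_measurable borel"
    using borel_measurable_continuous_onI f g by auto
  have "{\<omega>\<in>space M. Z \<omega> \<in> ?U} \<in> sets M" using Z by measurable
  then have "emeasure M {\<omega>\<in>space M. Z \<omega> \<in> ?U} = 0"
    using ae by (subst (asm) AE_iff_measurable[of "{\<omega>\<in>space M. Z \<omega> \<in> ?U}"]) auto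
  then have "measure M {\<omega>\<in>space M. Z \<omega> \<in> ?U} = 0" by (simp add: measure_def)
  then have "?U \<in> null_sets Q" by (rule Q_open_null[OF opn])
  then show ?thesis by (rule AE_not_in[THEN AE_mp]) auto
qed

lemma M_AE_from_Q:
  fixes f g :: "real \<Rightarrow> real"
  assumes js: "strict_mono_on {0..1} j"
    and f: "continuous_on UNIV f" and g: "continuous_on UNIV g"
    and ae: "AE x in Q. f x = g x"
  shows "AE \<omega> in M. f (Z \<omega>) = g (Z \<omega>)"
proof -
  interpret fQ: finite_measure Q by (rule Q_finite)
  interpret prob_space M by (rule M)
  let ?U = "{x. f x \<noteq> g x}"
  have opn: "open ?U" by (rule open_Collect_neq[OF f g])
  have fm[measurable]: "f \<in> borel_measurable borel" "g \<in> borel_measurable borel"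
    using borel_measurable_continuous_onI f g by auto
  have "?U \<in> sets Q" by simp
  then have "emeasure Q ?U = 0"
    using ae by (subst (asm) AE_iff_measurable[of ?U]) auto
  then have "measure Q ?U = 0" by (simp add: measure_def)
  then have "\<not> measure M {\<omega>\<in>space M. Z \<omega> \<in> ?U} > 0"
    using Q_open_pos[OF js opn] by auto
  then have "measure M {\<omega>\<in>space M. Z \<omega> \<in> ?U} = 0" by (simp add: measure_nonneg antisym not_less)
  moreover have "{\<omega>\<in>space M. Z \<omega> \<in> ?U} \<in> sets M" using Z by measurable
  ultimately show ?thesis
    by (subst AE_iff_measurable[of "{\<omega>\<in>space M. Z \<omega> \<in> ?U}"]) (auto simp: emeasure_eq_measure)
qed

end

definition Gf :: "'a measure \<Rightarrow> real \<Rightarrow> (real \<Rightarrow> real) \<Rightarrow> real \<Rightarrow> (real \<Rightarrow> real) \<Rightarrow> ('a \<Rightarrow> real)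
   \<Rightarrow> (real \<Rightarrow> real) \<Rightarrow> real \<Rightarrow> real" where
  "Gf M \<theta> k w u X I z = u (w - max (- z) 0 + I (max (- z) 0) - premium M \<theta> k (\<lambda>\<omega>. I (X \<omega>)))"

context setting
begin

abbreviation "G \<equiv> Gf M \<theta> k w u X"
abbreviation "prem I \<equiv> premium M \<theta> k (\<lambda>\<omega>. I (X \<omega>))"

lemma G_alt: "G I z = u (w - max (- z) 0 + Iext I (- z) - prem I)"
  by (simp add: Gf_def Iext_def)

lemma G_cont: "I \<in> Ic \<Longrightarrow> continuous_on UNIV (G I)"
proof -
  assume I: "I \<in> Ic"
  have c1: "continuous_on UNIV (\<lambda>z. Iext I (- z))"
    by (rule continuous_on_compose2[OF Iext_cont[OF I]]) (auto intro!: continuous_intros)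
  have "continuous_on UNIV (\<lambda>z. w - max (- z) 0 + Iext I (- z) - prem I)"
    by (intro continuous_intros c1)
  then have "continuous_on UNIV (\<lambda>z. u (w - max (- z) 0 + Iext I (- z) - prem I))"
    by (rule continuous_on_compose2[OF u_cont]) auto
  then show ?thesis unfolding G_alt by simp
qed

lemma G_mono: "I \<in> Ic \<Longrightarrow> mono (G I)"
proof
  fix z z' :: real assume I: "I \<in> Ic" and zz: "z \<le> z'"
  have "I (max (- z) 0) - I (max (- z') 0) \<le> max (- z) 0 - max (- z') 0"
    using Ic_D(4)[OF I, of "max (- z') 0" "max (- z) 0"] zz by auto
  then have "w - max (- z) 0 + I (max (- z) 0) - prem I \<le> w - max (- z') 0 + I (max (- z') 0) - prem I"
    by linarith
  then show "G I z \<le> G I z'"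
    unfolding Gf_def using usm by (simp add: strict_mono_less_eq)
qed

lemma obj_G: "\<omega> \<in> space M \<Longrightarrow> u (w - X \<omega> + I (X \<omega>) - prem I) = G I (- X \<omega>)"
  using Xnn by (simp add: Gf_def)

lemma obj_rep:
  assumes I: "I \<in> Ic"
  shows "integrable Qb.Q (G I)" "objective M \<theta> k b w u X I = integral\<^sup>L Qb.Q (G I)"
proof -
  have e: "\<forall>\<omega>\<in>space M. u (w - X \<omega> + I (X \<omega>) - prem I) = G I (- X \<omega>)"
    using obj_G by auto
  have fin: "rho_finite M b (\<lambda>\<omega>. G I (- X \<omega>))"
    using bfin I rho_cong(2)[OF e, of b] by simp
  note R = Qb.Q_rep[OF G_cont[OF I] G_mono[OF I] fin]
  show "integrable Qb.Q (G I)" using R(1) .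
  show "objective M \<theta> k b w u X I = integral\<^sup>L Qb.Q (G I)"
    unfolding objective_def using rho_cong(1)[OF e, of b] R(2) by simp
qed

lemma prem_nonneg:
  assumes I: "I \<in> Ic" shows "0 \<le> prem I"
proof -
  define S where "S = surv M (\<lambda>\<omega>. I (X \<omega>))"
  have S01: "S t \<in> {0..1}" for t unfolding S_def using surv_bounds[OF M] by auto
  have "0 \<le> (\<integral>\<omega>. I (X \<omega>) \<partial>M)"
    by (rule integral_nonneg_AE) (use Ic_D(1)[OF I] Xnn in \<open>auto intro!: AE_I2\<close>)
  then have a: "0 \<le> (1 + \<theta>) * (\<integral>\<omega>. I (X \<omega>) \<partial>M)" using th by simp
  have b: "0 \<le> rho M k (\<lambda>\<omega>. I (X \<omega>))"
    unfolding rho_def set_lebesgue_integral_def S_def[symmetric]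
    by (intro add_nonneg_nonneg integral_nonneg_AE AE_I2)
       (use knn S01 k1 in \<open>auto split: split_indicator\<close>)
  show ?thesis unfolding premium_def using a b by simp
qed

lemma G_le: "I \<in> Ic \<Longrightarrow> G I z \<le> u w"
proof -
  assume I: "I \<in> Ic"
  have "I (max (- z) 0) \<le> max (- z) 0" using Ic_D(2)[OF I, of "max (- z) 0" "max (- z) 0"] by auto
  then have "w - max (- z) 0 + I (max (- z) 0) - prem I \<le> w" using prem_nonneg[OF I] by linarith
  then show ?thesis unfolding Gf_def using usm by (simp add: strict_mono_less_eq)
qed

lemma prem_shift:
  assumes I: "I \<in> Ic" and J: "J \<in> Ic" and ae: "AE \<omega> in M. J (X \<omega>) = I (X \<omega>) + c"
  shows "prem J = prem I + (1 + \<theta>) * c"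
proof -
  interpret prob_space M by (rule M)
  have ae': "AE \<omega> in M. Iext J (X \<omega>) = Iext I (X \<omega>) + c"
    using ae AE_space by eventually_elim (use Xnn in \<open>auto simp: Iext_def\<close>)
  have cI: "continuous_on UNIV (\<lambda>x. Iext I x + c)" by (intro continuous_intros Iext_cont[OF I])
  have mI[measurable]: "Iext I \<in> borel_measurable borel" "Iext J \<in> borel_measurable borel"
    using borel_measurable_continuous_onI Iext_cont I J by auto
  have E: "(\<integral>\<omega>. J (X \<omega>) \<partial>M) = (\<integral>\<omega>. I (X \<omega>) \<partial>M) + c"
  proof -
    have "(\<integral>\<omega>. J (X \<omega>) \<partial>M) = (\<integral>\<omega>. I (X \<omega>) + c \<partial>M)"
      by (rule integral_cong_AE) (use IX_meas[OF I] IX_meas[OF J] ae in auto)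
    also have "\<dots> = (\<integral>\<omega>. I (X \<omega>) \<partial>M) + c"
      using IX_int[OF I] prob_space by (simp add: Bochner_Integration.integral_add)
    finally show ?thesis .
  qed
  have shiftQ: "(\<integral>x. Iext J x \<partial>Qm M X j) = (\<integral>x. Iext I x \<partial>Qm M X j) + c * j 1"
    if QS: "Qsetup M X j" and iI: "integrable (Qm M X j) (Iext I)" for j
  proof -
    interpret QS: Qsetup M X j by (rule QS)
    interpret fQ: finite_measure "Qm M X j" by (rule QS.Q_finite)
    have "AE x in Qm M X j. Iext J x = Iext I x + c"
      by (rule QS.Q_AE_from_M[OF Iext_cont[OF J] cI ae'])
    then have "(\<integral>x. Iext J x \<partial>Qm M X j) = (\<integral>x. Iext I x + c \<partial>Qm M X j)"
      by (intro integral_cong_AE) auto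
    also have "\<dots> = (\<integral>x. Iext I x \<partial>Qm M X j) + c * j 1"
      using iI QS.Q_UNIV' by (simp add: Bochner_Integration.integral_add)
    finally show ?thesis .
  qed
  have A: "(\<integral>x. Iext J x \<partial>QA.Q) = (\<integral>x. Iext I x \<partial>QA.Q) + c * kA k 1"
    by (rule shiftQ[OF QA.Qsetup_axioms prem_rep(1)[OF I]])
  have B: "(\<integral>x. Iext J x \<partial>QB.Q) = (\<integral>x. Iext I x \<partial>QB.Q) + c * kB k 1"
    by (rule shiftQ[OF QB.Qsetup_axioms prem_rep(2)[OF I]])
  have "c * kA k 1 - c * kB k 1 = 0" using kAB1 by (simp add: right_diff_distrib[symmetric])
  then show ?thesis
    unfolding prem_rep(3)[OF I] prem_rep(3)[OF J] E A B by (simp add: algebra_simps)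
qed

end



lemma integral_avg:
  fixes f g :: "'b \<Rightarrow> real"
  assumes "integrable N f" "integrable N g"
  shows "(\<integral>x. (f x + g x) / 2 \<partial>N) = ((\<integral>x. f x \<partial>N) + (\<integral>x. g x \<partial>N)) / 2"
  using assms by (simp add: Bochner_Integration.integral_add)

lemma Ic_avg:
  assumes "I1 \<in> Ic" "I2 \<in> Ic"
  shows "(\<lambda>x. (I1 x + I2 x) / 2) \<in> Ic"
proof -
  have *: "0 \<le> (I1 x + I2 x) / 2 \<and> (I1 x + I2 x) / 2 \<le> x \<and>
      (\<forall>y. 0 \<le> y \<and> y \<le> x \<longrightarrow> 0 \<le> (I1 x + I2 x) / 2 - (I1 y + I2 y) / 2 \<and> (I1 x + I2 x) / 2 - (I1 y + I2 y) / 2 \<le> x - y)"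
    if x: "0 \<le> x" for x
  proof -
    have a: "0 \<le> I1 x" "I1 x \<le> x" "0 \<le> I2 x" "I2 x \<le> x"
      using Ic_D[OF assms(1) x order_refl] Ic_D[OF assms(2) x order_refl] by auto
    have b: "I1 y \<le> I1 x \<and> I1 x - I1 y \<le> x - y \<and> I2 y \<le> I2 x \<and> I2 x - I2 y \<le> x - y"
      if "0 \<le> y" "y \<le> x" for y
      using Ic_D[OF assms(1) that] Ic_D[OF assms(2) that] by auto
    show ?thesis
    proof (intro conjI allI impI)
      show "0 \<le> (I1 x + I2 x) / 2" "(I1 x + I2 x) / 2 \<le> x" using a by auto
    next
      fix y assume y: "0 \<le> y \<and> y \<le> x"
      then have h: "I1 y \<le> I1 x" "I1 x - I1 y \<le> x - y" "I2 y \<le> I2 x" "I2 x - I2 y \<le> x - y"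
        using b[of y] by auto
      then show "0 \<le> (I1 x + I2 x) / 2 - (I1 y + I2 y) / 2" by (simp add: add_divide_distrib diff_divide_distrib)
    next
      fix y assume y: "0 \<le> y \<and> y \<le> x"
      then have h: "I1 y \<le> I1 x" "I1 x - I1 y \<le> x - y" "I2 y \<le> I2 x" "I2 x - I2 y \<le> x - y"
        using b[of y] by auto
      then show "(I1 x + I2 x) / 2 - (I1 y + I2 y) / 2 \<le> x - y" by (simp add: add_divide_distrib diff_divide_distrib)
    qed
  qed
  then show ?thesis unfolding Ic_def by blast
qed

context setting
begin

lemma uniq:
  assumes o1: "optimal M \<theta> k b w u X I1" and o2: "optimal M \<theta> k b w u X I2"
    and cond: "\<theta> \<noteq> 0 \<or> essinf M X = 0"
  shows "AE \<omega> in M. I1 (X \<omega>) = I2 (X \<omega>)"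
proof -
  interpret prob_space M by (rule M)
  have I1: "I1 \<in> Ic" and I2: "I2 \<in> Ic" using o1 o2 unfolding optimal_def by auto
  define I3 where "I3 = (\<lambda>x. (I1 x + I2 x) / 2)"
  have I3: "I3 \<in> Ic" unfolding I3_def by (rule Ic_avg[OF I1 I2])
  have V12: "objective M \<theta> k b w u X I1 = objective M \<theta> k b w u X I2"
    using o1 o2 I1 I2 unfolding optimal_def by (auto intro: antisym)
  have V3: "objective M \<theta> k b w u X I3 \<le> objective M \<theta> k b w u X I1"
    using o1 I3 unfolding optimal_def by auto
  have Iext3: "Iext I3 = (\<lambda>x. (Iext I1 x + Iext I2 x) / 2)"
    by (simp add: I3_def Iext_def fun_eq_iff)
  have p3: "prem I3 = (prem I1 + prem I2) / 2"
  proof -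
    have e1: "(\<integral>\<omega>. I3 (X \<omega>) \<partial>M) = ((\<integral>\<omega>. I1 (X \<omega>) \<partial>M) + (\<integral>\<omega>. I2 (X \<omega>) \<partial>M)) / 2"
      unfolding I3_def by (rule integral_avg[OF IX_int[OF I1] IX_int[OF I2]])
    have e2: "(\<integral>x. Iext I3 x \<partial>QA.Q) = ((\<integral>x. Iext I1 x \<partial>QA.Q) + (\<integral>x. Iext I2 x \<partial>QA.Q)) / 2"
      unfolding Iext3 by (rule integral_avg[OF prem_rep(1)[OF I1] prem_rep(1)[OF I2]])
    have e3: "(\<integral>x. Iext I3 x \<partial>QB.Q) = ((\<integral>x. Iext I1 x \<partial>QB.Q) + (\<integral>x. Iext I2 x \<partial>QB.Q)) / 2"
      unfolding Iext3 by (rule integral_avg[OF prem_rep(2)[OF I1] prem_rep(2)[OF I2]])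
    show ?thesis unfolding prem_rep(3)[OF I1] prem_rep(3)[OF I2] prem_rep(3)[OF I3] e1 e2 e3
      by (simp add: field_simps)
  qed
  define W where "W I x = w - x + I x - prem I" for I x
  have GW: "G I z = u (W I (max (- z) 0))" for I z by (simp add: Gf_def W_def)
  have W3: "W I3 x = (W I1 x + W I2 x) / 2" for x
    unfolding W_def p3 by (simp add: I3_def field_simps)
  have ustrict: "(u a + u c) / 2 < u ((a + c) / 2)" if "a \<noteq> c" for a c
  proof -
    have H: "\<And>x y t. x \<noteq> y \<Longrightarrow> 0 < t \<Longrightarrow> t < 1 \<Longrightarrow>
        t * u x + (1 - t) * u y < u (t * x + (1 - t) * y)"
      using usc unfolding strictly_concave_on_def by blast
    have "(1/2) * u a + (1 - 1/2) * u c < u ((1/2) * a + (1 - 1/2) * c)"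
      by (rule H) (use that in auto)
    then show ?thesis by (simp add: field_simps)
  qed
  have uavg: "(u a + u c) / 2 \<le> u ((a + c) / 2)" for a c
    using ustrict[of a c] by (cases "a = c") auto
  define Dz where "Dz z = G I3 z - (G I1 z + G I2 z) / 2" for z
  have Dnn: "0 \<le> Dz z" for z unfolding Dz_def GW W3 using uavg by simp
  have iD: "integrable Qb.Q Dz"
    unfolding Dz_def by (intro Bochner_Integration.integrable_diff integrable_divide_zero
        Bochner_Integration.integrable_add obj_rep(1) I1 I2 I3)
  have "integral\<^sup>L Qb.Q Dz = objective M \<theta> k b w u X I3 - (objective M \<theta> k b w u X I1 + objective M \<theta> k b w u X I2) / 2"
    unfolding Dz_def obj_rep(2)[OF I1] obj_rep(2)[OF I2] obj_rep(2)[OF I3]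
    using obj_rep(1)[OF I1] obj_rep(1)[OF I2] obj_rep(1)[OF I3]
    by (simp add: Bochner_Integration.integral_diff Bochner_Integration.integral_add)
  also have "\<dots> \<le> 0" using V12 V3 by simp
  finally have "integral\<^sup>L Qb.Q Dz \<le> 0" .
  moreover have "0 \<le> integral\<^sup>L Qb.Q Dz" by (intro integral_nonneg_AE AE_I2 Dnn)
  ultimately have "integral\<^sup>L Qb.Q Dz = 0" by simp
  then have aeQ: "AE z in Qb.Q. Dz z = 0"
    using integral_nonneg_eq_0_iff_AE[OF iD] Dnn by auto
  have aeQ': "AE z in Qb.Q. G I3 z = (G I1 z + G I2 z) / 2"
    using aeQ by eventually_elim (simp add: Dz_def)
  have cavg: "continuous_on UNIV (\<lambda>z. (G I1 z + G I2 z) / 2)"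
    by (intro continuous_intros G_cont I1 I2) auto
  have aeM: "AE \<omega> in M. G I3 (- X \<omega>) = (G I1 (- X \<omega>) + G I2 (- X \<omega>)) / 2"
    by (rule Qb.M_AE_from_Q[OF bsm G_cont[OF I3] cavg aeQ'])
  define c where "c = prem I1 - prem I2"
  have aeW: "AE \<omega> in M. I1 (X \<omega>) = I2 (X \<omega>) + c"
    using aeM AE_space
  proof eventually_elim
    case (elim \<omega>)
    then have mx: "max (- (- X \<omega>)) 0 = X \<omega>" using Xnn by auto
    have "W I1 (X \<omega>) = W I2 (X \<omega>)"
    proof (rule ccontr)
      assume "W I1 (X \<omega>) \<noteq> W I2 (X \<omega>)"
      then have "(G I1 (- X \<omega>) + G I2 (- X \<omega>)) / 2 < G I3 (- X \<omega>)"
        unfolding GW mx W3 by (rule ustrict)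
      then show False using elim by simp
    qed
    then show ?case unfolding W_def c_def by simp
  qed
  have "prem I1 = prem I2 + (1 + \<theta>) * c"
    by (rule prem_shift[OF I2 I1 aeW])
  then have thc: "\<theta> * c = 0" unfolding c_def by (auto simp: algebra_simps)
  have c0: "c = 0"
  proof (cases "\<theta> = 0")
    case False then show ?thesis using thc by simp
  next
    case True
    then have ess: "essinf M X = 0" using cond by simp
    have "AE \<omega> in M. \<bar>c\<bar> \<le> X \<omega>"
      using aeW AE_space
    proof eventually_elim
      case (elim \<omega>)
      have x0: "0 \<le> X \<omega>" using elim Xnn by auto
      have h1: "0 \<le> I1 (X \<omega>)" "I1 (X \<omega>) \<le> X \<omega>" using Ic_D[OF I1 x0 order_refl] by auto
      have h2: "0 \<le> I2 (X \<omega>)" "I2 (X \<omega>) \<le> X \<omega>" using Ic_D[OF I2 x0 order_refl] by auto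
      have "c \<le> X \<omega>" using h1 h2 elim(1) by linarith
      moreover have "- c \<le> X \<omega>" using h1 h2 elim(1) by linarith
      ultimately show ?case by (simp add: abs_le_iff)
    qed
    then have ae2: "AE \<omega> in M. - ereal (X \<omega>) \<le> - ereal \<bar>c\<bar>"
      by eventually_elim simp
    have meas: "(\<lambda>\<omega>. - ereal (X \<omega>)) \<in> borel_measurable M" using Xm by measurable
    have "esssup M (\<lambda>\<omega>. - ereal (X \<omega>)) \<le> - ereal \<bar>c\<bar>"
      by (rule esssup_I[OF meas ae2])
    then have "- (- ereal \<bar>c\<bar>) \<le> - esssup M (\<lambda>\<omega>. - ereal (X \<omega>))"
      using ereal_minus_le_minus by blast
    then have "ereal \<bar>c\<bar> \<le> essinf M X" unfolding essinf_def by simp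
    then show ?thesis using ess by simp
  qed
  show ?thesis using aeW c0 by simp
qed

end



lemma Ic_lip0:
  assumes I: "I \<in> Ic" and "0 \<le> x" "x \<le> q"
  shows "\<bar>I x - I q\<bar> \<le> q - x"
  using Ic_D[OF I assms(2,3)] by auto

lemma Ic_seq_compact:
  fixes f :: "nat \<Rightarrow> real \<Rightarrow> real"
  assumes f: "\<And>n. f n \<in> Ic"
  shows "\<exists>r L. strict_mono r \<and> L \<in> Ic \<and> (\<forall>x\<ge>0. (\<lambda>n. f (r n) x) \<longlonglongrightarrow> L x)"
proof -
  obtain m :: "real \<Rightarrow> nat" where "bij_betw m \<rat> UNIV"
    using countable_rat Rats_infinite by (erule countableE_infinite)
  then obtain rr :: "nat \<Rightarrow> real" where bij: "bij_betw rr UNIV \<rat>"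
    using bij_betw_inv by blast
  let ?P = "\<lambda>n. \<lambda>s. convergent (\<lambda>k. f (s k) (max (rr n) 0))"
  interpret nat: subseqs ?P
  proof (unfold convergent_def, unfold subseqs_def, auto)
    fix n :: nat and s :: "nat \<Rightarrow> nat" assume s: "strict_mono s"
    have "bounded {0..max (rr n) 0}"
      using bounded_closed_interval by auto
    moreover have "\<And>k. f (s k) (max (rr n) 0) \<in> {0..max (rr n) 0}"
      using Ic_D[OF f _ order_refl] by auto
    ultimately have "\<exists>l s'. strict_mono s' \<and> ((\<lambda>k. f (s k) (max (rr n) 0)) \<circ> s') \<longlonglongrightarrow> l"
      using compact_Icc compact_imp_seq_compact seq_compactE by metis
    thus "\<exists>s'. strict_mono (s'::nat\<Rightarrow>nat) \<and> (\<exists>l. (\<lambda>k. f (s (s' k)) (max (rr n) 0)) \<longlonglongrightarrow> l)"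
      by (auto simp: comp_def)
  qed
  define d where "d = nat.diagseq"
  have subseq: "strict_mono d"
    unfolding d_def using nat.subseq_diagseq by auto
  have rat_cnv: "?P n d" for n
  proof -
    have Pn_seqseq: "?P n (nat.seqseq (Suc n))"
      by (rule nat.seqseq_holds)
    have 1: "(\<lambda>k. f ((nat.seqseq (Suc n) \<circ> (\<lambda>k. nat.fold_reduce (Suc n) k
      (Suc n + k))) k) (max (rr n) 0)) = (\<lambda>k. f (nat.seqseq (Suc n) k) (max (rr n) 0)) \<circ>
      (\<lambda>k. nat.fold_reduce (Suc n) k (Suc n + k))"
      by auto
    have 2: "?P n (d \<circ> ((+) (Suc n)))"
      unfolding d_def nat.diagseq_seqseq 1
      by (intro convergent_subseq_convergent Pn_seqseq nat.subseq_diagonal_rest)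
    then obtain L where 3: "(\<lambda>na. f (d (na + Suc n)) (max (rr n) 0)) \<longlonglongrightarrow> L"
      by (auto simp: add.commute dest: convergentD)
    then have "(\<lambda>k. f (d k) (max (rr n) 0)) \<longlonglongrightarrow> L"
      by (rule LIMSEQ_offset)
    then show ?thesis
      by (auto simp: convergent_def)
  qed
  have qcnv: "convergent (\<lambda>k. f (d k) q)" if "q \<in> \<rat>" "0 \<le> q" for q
  proof -
    have "q \<in> range rr" using bij that unfolding bij_betw_def by auto
    then obtain n where "rr n = q" by auto
    then show ?thesis using rat_cnv[of n] that by simp
  qed
  have xcnv: "convergent (\<lambda>k. f (d k) x)" if x: "0 \<le> x" for x
  proof -
    have "Cauchy (\<lambda>k. f (d k) x)"
    proof (rule CauchyI)
      fix e :: real assume e: "0 < e"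
      obtain q where q: "q \<in> \<rat>" "x < q" "q < x + e / 3"
        using Rats_dense_in_real[of x "x + e/3"] e by auto
      have "Cauchy (\<lambda>k. f (d k) q)" using qcnv[OF q(1)] q x by (intro convergent_Cauchy) auto
      then obtain N where N: "\<forall>m\<ge>N. \<forall>n\<ge>N. norm (f (d m) q - f (d n) q) < e / 3"
        using CauchyD[of _ "e/3"] e by force
      show "\<exists>M. \<forall>m\<ge>M. \<forall>n\<ge>M. norm (f (d m) x - f (d n) x) < e"
      proof (intro exI allI impI)
        fix m n assume "N \<le> m" "N \<le> n"
        then have a: "\<bar>f (d m) q - f (d n) q\<bar> < e / 3" using N by auto
        have b: "\<bar>f (d m) x - f (d m) q\<bar> \<le> q - x" by (rule Ic_lip0[OF f x]) (use q in auto)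
        have c: "\<bar>f (d n) x - f (d n) q\<bar> \<le> q - x" by (rule Ic_lip0[OF f x]) (use q in auto)
        have "\<bar>f (d m) x - f (d n) x\<bar> \<le> \<bar>f (d m) x - f (d m) q\<bar> + \<bar>f (d m) q - f (d n) q\<bar> + \<bar>f (d n) x - f (d n) q\<bar>"
          by linarith
        then show "norm (f (d m) x - f (d n) x) < e" using a b c q by simp
      qed
    qed
    then show ?thesis by (simp add: Cauchy_convergent_iff)
  qed
  define L where "L x = lim (\<lambda>k. f (d k) x)" for x
  have Lt: "(\<lambda>k. f (d k) x) \<longlonglongrightarrow> L x" if "0 \<le> x" for x
    unfolding L_def using xcnv[OF that] by (simp add: convergent_LIMSEQ_iff)
  have LI: "L \<in> Ic"
    unfolding Ic_def
  proof (intro CollectI allI impI conjI)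
    fix x :: real assume x: "0 \<le> x"
    show "0 \<le> L x" by (rule LIMSEQ_le_const[OF Lt[OF x]]) (use Ic_D[OF f x order_refl] in auto)
    show "L x \<le> x" by (rule LIMSEQ_le_const2[OF Lt[OF x]]) (use Ic_D[OF f x order_refl] in auto)
    fix y :: real assume y: "0 \<le> y \<and> y \<le> x"
    have t: "(\<lambda>k. f (d k) x - f (d k) y) \<longlonglongrightarrow> L x - L y"
      using Lt[OF x] Lt[of y] y by (intro tendsto_diff) auto
    show "0 \<le> L x - L y" by (rule LIMSEQ_le_const[OF t]) (use Ic_D[OF f] y in auto)
    show "L x - L y \<le> x - y" by (rule LIMSEQ_le_const2[OF t]) (use Ic_D[OF f] y in auto)
  qed
  show ?thesis using subseq LI Lt by blast
qed



lemma id_Ic: "(\<lambda>x. x) \<in> Ic"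
  unfolding Ic_def by auto

context setting
begin

abbreviation "V \<equiv> objective M \<theta> k b w u X"

lemma Qb_UNIV1: "measure Qb.Q (space Qb.Q) = 1"
  using Qb.Q_UNIV' b1 by simp

lemma V_le: "I \<in> Ic \<Longrightarrow> V I \<le> u w"
proof -
  assume I: "I \<in> Ic"
  interpret fQ: finite_measure Qb.Q by (rule Qb.Q_finite)
  have "V I = integral\<^sup>L Qb.Q (G I)" by (rule obj_rep(2)[OF I])
  also have "\<dots> \<le> integral\<^sup>L Qb.Q (\<lambda>_. u w)"
    by (intro integral_mono obj_rep(1)[OF I] fQ.integrable_const G_le[OF I])
  also have "\<dots> = u w" using Qb_UNIV1 by simp
  finally show ?thesis .
qed

lemma prem_lim:
  assumes f: "\<And>n. f n \<in> Ic" and L: "L \<in> Ic" and lim: "\<And>x. 0 \<le> x \<Longrightarrow> (\<lambda>n. f n x) \<longlonglongrightarrow> L x"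
  shows "(\<lambda>n. prem (f n)) \<longlonglongrightarrow> prem L"
proof -
  have E: "(\<lambda>n. \<integral>\<omega>. f n (X \<omega>) \<partial>M) \<longlonglongrightarrow> (\<integral>\<omega>. L (X \<omega>) \<partial>M)"
  proof (rule integral_dominated_convergence[OF IX_meas[OF L] IX_meas[OF f] Xint])
    show "AE \<omega> in M. (\<lambda>n. f n (X \<omega>)) \<longlonglongrightarrow> L (X \<omega>)"
      using Xnn lim by (intro AE_I2) auto
    show "AE \<omega> in M. norm (f n (X \<omega>)) \<le> X \<omega>" for n
      using Xnn Ic_D[OF f] by (intro AE_I2) auto
  qed
  have Qlim: "(\<lambda>n. \<integral>x. Iext (f n) x \<partial>Qm M X j) \<longlonglongrightarrow> (\<integral>x. Iext L x \<partial>Qm M X j)"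
    if QS: "Qsetup M X j" and iid: "integrable (Qm M X j) (Iext (\<lambda>x. x))" for j
  proof -
    interpret QS: Qsetup M X j by (rule QS)
    have mL: "Iext L \<in> borel_measurable (Qm M X j)"
      using borel_measurable_continuous_onI[OF Iext_cont[OF L]] by simp
    have mf: "Iext (f n) \<in> borel_measurable (Qm M X j)" for n
      using borel_measurable_continuous_onI[OF Iext_cont[OF f]] by simp
    show ?thesis
    proof (rule integral_dominated_convergence[OF mL mf iid])
      show "AE x in Qm M X j. (\<lambda>n. Iext (f n) x) \<longlonglongrightarrow> Iext L x"
        using lim by (intro AE_I2) (simp add: Iext_def)
      show "AE x in Qm M X j. norm (Iext (f n) x) \<le> Iext (\<lambda>x. x) x" for n
        using Iext_bounds[OF f] by (intro AE_I2) (simp add: Iext_def)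
    qed
  qed
  have A: "(\<lambda>n. \<integral>x. Iext (f n) x \<partial>QA.Q) \<longlonglongrightarrow> (\<integral>x. Iext L x \<partial>QA.Q)"
    by (rule Qlim[OF QA.Qsetup_axioms prem_rep(1)[OF id_Ic]])
  have B: "(\<lambda>n. \<integral>x. Iext (f n) x \<partial>QB.Q) \<longlonglongrightarrow> (\<integral>x. Iext L x \<partial>QB.Q)"
    by (rule Qlim[OF QB.Qsetup_axioms prem_rep(2)[OF id_Ic]])
  show ?thesis
    unfolding prem_rep(3)[OF L] prem_rep(3)[OF f]
    by (intro tendsto_intros E A B)
qed

lemma exists_opt: "\<exists>I. optimal M \<theta> k b w u X I"
proof -
  interpret fQ: finite_measure Qb.Q by (rule Qb.Q_finite)
  have ne: "Ic \<noteq> {}" using id_Ic by auto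
  have bdd: "bdd_above (V ` Ic)" using V_le by (auto intro!: bdd_aboveI)
  define s where "s = (SUP I\<in>Ic. V I)"
  have s_le: "s \<le> u w" unfolding s_def using V_le ne by (intro cSUP_least) auto
  have Vs: "V I \<le> s" if "I \<in> Ic" for I unfolding s_def by (rule cSUP_upper[OF that bdd])
  have "\<forall>n. \<exists>I. I \<in> Ic \<and> s - 1 / real (Suc n) < V I"
  proof
    fix n
    have "s - 1 / real (Suc n) < (SUP I\<in>Ic. V I)" unfolding s_def[symmetric] by simp
    then have "\<exists>I\<in>Ic. s - 1 / real (Suc n) < V I" by (simp add: less_cSUP_iff[OF ne bdd])
    then show "\<exists>I. I \<in> Ic \<and> s - 1 / real (Suc n) < V I" by blast
  qed
  from choice[OF this] obtain fs where fs': "\<forall>n. fs n \<in> Ic \<and> s - 1 / real (Suc n) < V (fs n)"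
    by blast
  then have fs: "\<And>n. fs n \<in> Ic" "\<And>n. s - 1 / real (Suc n) < V (fs n)" by auto
  obtain r L where rL: "strict_mono r \<and> L \<in> Ic \<and> (\<forall>x\<ge>0. (\<lambda>n. fs (r n) x) \<longlonglongrightarrow> L x)"
  proof -
    have ex: "\<exists>r L. strict_mono r \<and> L \<in> Ic \<and> (\<forall>x\<ge>0. (\<lambda>n. fs (r n) x) \<longlonglongrightarrow> L x)"
      by (rule Ic_seq_compact) (rule fs(1))
    show ?thesis using ex that by (elim exE) auto
  qed
  have r: "strict_mono r" and L: "L \<in> Ic" and lim: "\<forall>x\<ge>0. (\<lambda>n. fs (r n) x) \<longlonglongrightarrow> L x"
    using rL by auto
  define g where "g n = fs (r n)" for n
  have g: "g n \<in> Ic" for n unfolding g_def using fs by auto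
  have glim: "0 \<le> x \<Longrightarrow> (\<lambda>n. g n x) \<longlonglongrightarrow> L x" for x using lim by (simp add: g_def)
  have Vg: "(\<lambda>n. V (g n)) \<longlonglongrightarrow> s"
  proof (rule tendsto_sandwich)
    show "eventually (\<lambda>n. s - 1 / real (Suc n) \<le> V (g n)) sequentially"
    proof (intro always_eventually allI)
      fix n
      have "1 / real (Suc (r n)) \<le> 1 / real (Suc n)"
        using seq_suble[OF r, of n] by (intro divide_left_mono) auto
      then show "s - 1 / real (Suc n) \<le> V (g n)" using fs(2)[of "r n"] unfolding g_def by linarith
    qed
    show "eventually (\<lambda>n. V (g n) \<le> s) sequentially" using Vs g by auto
    have "(\<lambda>n. 1 / real (Suc n)) \<longlonglongrightarrow> 0" using LIMSEQ_inverse_real_of_nat by (simp add: inverse_eq_divide)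
    from tendsto_diff[OF tendsto_const[of s] this]
    show "(\<lambda>n. s - 1 / real (Suc n)) \<longlonglongrightarrow> s" by simp
    show "(\<lambda>n. s) \<longlonglongrightarrow> s" by simp
  qed
  have plim: "(\<lambda>n. prem (g n)) \<longlonglongrightarrow> prem L" by (rule prem_lim[OF g L glim])
  have Glim: "(\<lambda>n. G (g n) z) \<longlonglongrightarrow> G L z" for z
  proof -
    have "(\<lambda>n. w - max (- z) 0 + g n (max (- z) 0) - prem (g n)) \<longlonglongrightarrow> w - max (- z) 0 + L (max (- z) 0) - prem L"
      by (intro tendsto_intros glim plim) auto
    then have "(\<lambda>n. u (w - max (- z) 0 + g n (max (- z) 0) - prem (g n))) \<longlonglongrightarrow> u (w - max (- z) 0 + L (max (- z) 0) - prem L)"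
      by (rule continuous_on_tendsto_compose[OF u_cont]) auto
    then show ?thesis by (simp add: Gf_def)
  qed
  have mG: "G I \<in> borel_measurable Qb.Q" if "I \<in> Ic" for I
    using borel_measurable_continuous_onI[OF G_cont[OF that]] by simp
  have nnI: "(\<integral>\<^sup>+z. ennreal (u w - G I z) \<partial>Qb.Q) = ennreal (u w - V I)" if I: "I \<in> Ic" for I
  proof -
    have i: "integrable Qb.Q (\<lambda>z. u w - G I z)"
      by (intro Bochner_Integration.integrable_diff fQ.integrable_const obj_rep(1)[OF I])
    have "(\<integral>\<^sup>+z. ennreal (u w - G I z) \<partial>Qb.Q) = ennreal (integral\<^sup>L Qb.Q (\<lambda>z. u w - G I z))"
      by (rule nn_integral_eq_integral[OF i]) (use G_le[OF I] in auto)
    also have "integral\<^sup>L Qb.Q (\<lambda>z. u w - G I z) = u w - V I"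
      using obj_rep[OF I] fQ.integrable_const Qb_UNIV1 by (simp add: Bochner_Integration.integral_diff)
    finally show ?thesis .
  qed
  have "(\<integral>\<^sup>+z. liminf (\<lambda>n. ennreal (u w - G (g n) z)) \<partial>Qb.Q) \<le> liminf (\<lambda>n. \<integral>\<^sup>+z. ennreal (u w - G (g n) z) \<partial>Qb.Q)"
  proof (rule nn_integral_liminf)
    fix i
    have [measurable]: "G (g i) \<in> borel_measurable Qb.Q" by (rule mG[OF g])
    show "(\<lambda>z. ennreal (u w - G (g i) z)) \<in> borel_measurable Qb.Q" by measurable
  qed
  moreover have "liminf (\<lambda>n. ennreal (u w - G (g n) z)) = ennreal (u w - G L z)" for z
    by (intro lim_imp_Liminf tendsto_ennrealI tendsto_intros Glim) simp
  moreover have "liminf (\<lambda>n. \<integral>\<^sup>+z. ennreal (u w - G (g n) z) \<partial>Qb.Q) = ennreal (u w - s)"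
    unfolding nnI[OF g] by (intro lim_imp_Liminf tendsto_ennrealI tendsto_intros Vg) simp
  ultimately have "ennreal (u w - V L) \<le> ennreal (u w - s)"
    using nnI[OF L] by simp
  then have "u w - V L \<le> u w - s" using s_le by (simp add: ennreal_le_iff)
  then have "s \<le> V L" by simp
  then have "optimal M \<theta> k b w u X L"
    unfolding optimal_def using L Vs by (auto intro: order_trans)
  then show ?thesis by blast
qed

end



lemma J1_Ic:
  assumes I: "I \<in> Ic" and d: "0 \<le> d"
  shows "(\<lambda>x. max 0 (I x - I d)) \<in> Ic"
proof -
  have Id: "0 \<le> I d" using Ic_D[OF I d order_refl] by auto
  have "0 \<le> max 0 (I x - I d) \<and> max 0 (I x - I d) \<le> x \<and>
      (\<forall>y. 0 \<le> y \<and> y \<le> x \<longrightarrow> 0 \<le> max 0 (I x - I d) - max 0 (I y - I d) \<and> max 0 (I x - I d) - max 0 (I y - I d) \<le> x - y)"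
    if x: "0 \<le> x" for x
  proof (intro conjI allI impI)
    have a: "0 \<le> I x" "I x \<le> x" using Ic_D[OF I x order_refl] by auto
    show "0 \<le> max 0 (I x - I d)" by simp
    show "max 0 (I x - I d) \<le> x" using a Id by simp
  next
    fix y assume y: "0 \<le> y \<and> y \<le> x"
    then have h: "I y \<le> I x" "I x - I y \<le> x - y" using Ic_D[OF I] by auto
    show "0 \<le> max 0 (I x - I d) - max 0 (I y - I d)" using h by (simp add: max_def)
  next
    fix y assume y: "0 \<le> y \<and> y \<le> x"
    then have h: "I y \<le> I x" "I x - I y \<le> x - y" using Ic_D[OF I] by auto
    show "max 0 (I x - I d) - max 0 (I y - I d) \<le> x - y" using h by (simp add: max_def)
  qed
  then show ?thesis unfolding Ic_def by blast
qed

lemma J2_Ic: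
  assumes I: "I \<in> Ic" and d: "0 \<le> d"
  shows "(\<lambda>x. min x (I x + d)) \<in> Ic"
proof -
  have "0 \<le> min x (I x + d) \<and> min x (I x + d) \<le> x \<and>
      (\<forall>y. 0 \<le> y \<and> y \<le> x \<longrightarrow> 0 \<le> min x (I x + d) - min y (I y + d) \<and> min x (I x + d) - min y (I y + d) \<le> x - y)"
    if x: "0 \<le> x" for x
  proof (intro conjI allI impI)
    have a: "0 \<le> I x" "I x \<le> x" using Ic_D[OF I x order_refl] by auto
    show "0 \<le> min x (I x + d)" using a x d by simp
    show "min x (I x + d) \<le> x" by simp
  next
    fix y assume y: "0 \<le> y \<and> y \<le> x"
    then have h: "I y \<le> I x" "I x - I y \<le> x - y" using Ic_D[OF I] by auto
    show "0 \<le> min x (I x + d) - min y (I y + d)" using h y by (simp add: min_def)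
  next
    fix y assume y: "0 \<le> y \<and> y \<le> x"
    then have h: "I y \<le> I x" "I x - I y \<le> x - y" using Ic_D[OF I] by auto
    show "min x (I x + d) - min y (I y + d) \<le> x - y" using h y by (simp add: min_def)
  qed
  then show ?thesis unfolding Ic_def by blast
qed

context setting
begin

lemma obj_meas:
  assumes I: "I \<in> Ic"
  shows "(\<lambda>\<omega>. u (w - X \<omega> + I (X \<omega>) - p)) \<in> borel_measurable M"
proof -
  have [measurable]: "(\<lambda>\<omega>. I (X \<omega>)) \<in> borel_measurable M" by (rule IX_meas[OF I])
  have [measurable]: "X \<in> borel_measurable M" by (rule Xm)
  have "(\<lambda>\<omega>. w - X \<omega> + I (X \<omega>) - p) \<in> borel_measurable M" by measurable
  then show ?thesis by (rule borel_measurable_continuous_on[OF u_cont])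
qed

lemma rho_cong_AE:
  assumes f: "f \<in> borel_measurable M" and g: "g \<in> borel_measurable M" and ae: "AE \<omega> in M. f \<omega> = g \<omega>"
  shows "rho M j f = rho M j g"
proof -
  have "surv M f t = surv M g t" for t
    unfolding surv_def
    by (rule measure_eq_AE) (use ae f g in \<open>auto\<close>)
  then show ?thesis unfolding rho_def by simp
qed

lemma nonuniq:
  assumes th0: "\<theta> = 0" and ess: "essinf M X \<noteq> 0"
    and un: "\<forall>I1 I2. optimal M \<theta> k b w u X I1 \<and> optimal M \<theta> k b w u X I2 \<longrightarrow> (AE \<omega> in M. I1 (X \<omega>) = I2 (X \<omega>))"
  shows False
proof -
  interpret prob_space M by (rule M)
  define E where "E = esssup M (\<lambda>\<omega>. - ereal (X \<omega>))"
  have meas: "(\<lambda>\<omega>. - ereal (X \<omega>)) \<in> borel_measurable M" using Xm by measurable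
  have "AE \<omega> in M. - ereal (X \<omega>) \<le> 0" using Xnn by (intro AE_I2) auto
  then have "E \<le> 0" unfolding E_def by (rule esssup_I[OF meas])
  moreover have "E \<noteq> 0" using ess unfolding essinf_def E_def by auto
  ultimately have "E < 0" by simp
  then obtain z where z: "E < z" "z < 0" using dense by blast
  have "z \<noteq> -\<infinity>" using z by auto
  moreover have "z \<noteq> \<infinity>" using z by auto
  ultimately obtain d0 where d0: "z = ereal d0" by (cases z) auto
  define d where "d = - d0"
  have d: "0 < d" using z d0 by (simp add: d_def)
  have aed: "AE \<omega> in M. d < X \<omega>"
    using esssup_AE[of "\<lambda>\<omega>. - ereal (X \<omega>)" M]
  proof eventually_elim
    case (elim \<omega>)
    then have a: "- ereal (X \<omega>) \<le> E" unfolding E_def .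
    have b: "E < ereal d0" using z d0 by simp
    have "- ereal (X \<omega>) < ereal d0" using le_less_trans[OF a b] .
    then show ?case by (simp add: d_def)
  qed
  obtain Is where Is: "optimal M \<theta> k b w u X Is" using exists_opt by blast
  have IsI: "Is \<in> Ic" using Is unfolding optimal_def by auto
  have Isd: "0 \<le> Is d" using Ic_D[OF IsI, of d d] d by auto
  have "\<exists>J c. J \<in> Ic \<and> c \<noteq> 0 \<and> (AE \<omega> in M. J (X \<omega>) = Is (X \<omega>) + c)"
  proof (cases "Is d = 0")
    case False
    then have pos: "0 < Is d" using Isd by simp
    have "AE \<omega> in M. max 0 (Is (X \<omega>) - Is d) = Is (X \<omega>) + (- Is d)"
      using aed
    proof eventually_elim
      case (elim \<omega>)
      then have "Is d \<le> Is (X \<omega>)" using Ic_D[OF IsI, of d "X \<omega>"] d by auto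
      then show ?case by simp
    qed
    then show ?thesis using J1_Ic[OF IsI, of d] d pos
      by (intro exI[of _ "\<lambda>x. max 0 (Is x - Is d)"] exI[of _ "- Is d"]) auto
  next
    case True
    have "AE \<omega> in M. min (X \<omega>) (Is (X \<omega>) + d) = Is (X \<omega>) + d"
      using aed
    proof eventually_elim
      case (elim \<omega>)
      then have "Is (X \<omega>) - Is d \<le> X \<omega> - d" using Ic_D[OF IsI, of d "X \<omega>"] d by auto
      then show ?case using True by simp
    qed
    then show ?thesis using J2_Ic[OF IsI, of d] d
      by (intro exI[of _ "\<lambda>x. min x (Is x + d)"] exI[of _ d]) auto
  qed
  then obtain J c where J: "J \<in> Ic" and c: "c \<noteq> 0" and aeJ: "AE \<omega> in M. J (X \<omega>) = Is (X \<omega>) + c"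
    by blast
  have pJ: "prem J = prem Is + c" using prem_shift[OF IsI J aeJ] th0 by simp
  have VJ: "V J = V Is"
    unfolding objective_def
  proof (rule rho_cong_AE[OF obj_meas[OF J] obj_meas[OF IsI]])
    show "AE \<omega> in M. u (w - X \<omega> + J (X \<omega>) - prem J) = u (w - X \<omega> + Is (X \<omega>) - prem Is)"
      using aeJ
    proof eventually_elim
      case (elim \<omega>)
      have "w - X \<omega> + J (X \<omega>) - prem J = w - X \<omega> + Is (X \<omega>) - prem Is"
        using elim pJ by simp
      then show ?case by (rule arg_cong)
    qed
  qed
  have "optimal M \<theta> k b w u X J"
    using Is J VJ unfolding optimal_def by simp
  then have "AE \<omega> in M. J (X \<omega>) = Is (X \<omega>)" using un Is by blast
  then have "AE \<omega> in M. False" using aeJ by eventually_elim (use c in simp)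
  then show False using AE_False prob_space.emeasure_space_1[OF M] by simp
qed

end

theorem proposition2p3:
  fixes M :: "'a measure" and X :: "'a \<Rightarrow> real"
    and \<theta> w :: real and k b u :: "real \<Rightarrow> real"
  assumes "prob_space M"
    and "X \<in> borel_measurable M" and "\<forall>\<omega>\<in>space M. X \<omega> \<ge> 0" and "integrable M X"
    and "\<theta> > -1"
    and "continuous_on {0..1} k" and "concave_on {0..1} k"
    and "\<forall>p\<in>{0..1}. k p \<ge> 0" and "k 0 = 0" and "k 1 = 0"
    and "\<exists>u' u''. (\<forall>x. (u has_real_derivative u' x) (at x)) \<and>
                 (\<forall>x. (u' has_real_derivative u'' x) (at x)) \<and> continuous_on UNIV u''"
    and "strict_mono u" and "concave_on UNIV u" and "strictly_concave_on UNIV u"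
    and "\<exists>b'. continuous_on {0..1} b' \<and>
               (\<forall>p\<in>{0..1}. (b has_real_derivative b' p) (at p within {0..1}))"
    and "strict_mono_on {0..1} b" and "convex_on {0..1} b"
    and "\<forall>p\<in>{0..1}. b p \<in> {0..1}" and "b 0 = 0" and "b 1 = 1"
    and "\<forall>I\<in>Ic. rho_finite M k (\<lambda>\<omega>. I (X \<omega>))"
    and "\<forall>I\<in>Ic. rho_finite M b
           (\<lambda>\<omega>. u (w - X \<omega> + I (X \<omega>) - premium M \<theta> k (\<lambda>\<omega>'. I (X \<omega>'))))"
  shows "(\<forall>I1 I2. optimal M \<theta> k b w u X I1 \<and> optimal M \<theta> k b w u X I2
                  \<longrightarrow> (AE \<omega> in M. I1 (X \<omega>) = I2 (X \<omega>)))
         \<longleftrightarrow> (\<theta> \<noteq> 0 \<or> essinf M X = 0)"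
proof -
  interpret S: setting M X \<theta> w k b u
    using assms by (rule setting.intro)
  show ?thesis
  proof
    assume un: "\<forall>I1 I2. optimal M \<theta> k b w u X I1 \<and> optimal M \<theta> k b w u X I2
                  \<longrightarrow> (AE \<omega> in M. I1 (X \<omega>) = I2 (X \<omega>))"
    show "\<theta> \<noteq> 0 \<or> essinf M X = 0"
    proof (rule ccontr)
      assume "\<not> (\<theta> \<noteq> 0 \<or> essinf M X = 0)"
      then have "\<theta> = 0" "essinf M X \<noteq> 0" by auto
      then show False using S.nonuniq un by blast
    qed
  next
    assume c: "\<theta> \<noteq> 0 \<or> essinf M X = 0"
    show "\<forall>I1 I2. optimal M \<theta> k b w u X I1 \<and> optimal M \<theta> k b w u X I2
                  \<longrightarrow> (AE \<omega> in M. I1 (X \<omega>) = I2 (X \<omega>))"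
      using S.uniq c by blast
  qed
qed


end
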